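(* For each even integer $c\ge2$, let $\mathcal{P}_c$ be the Gauss–Legendre distribution. Then $\mathcal{R}_{\ell,\mathcal{P}_c}\ge\frac{c+1}{c\pi}$ for all $1\le\ell\le c$, and for every fixed integer $\ell\ge1$, $\lim_{c\to\infty}\mathcal{R}_{\ell,\mathcal{P}_c}=1/\pi$ (limit over even $c\ge\ell$).
   Context: For a probability distribution $\mathcal{P}$ on a finite subset of $(0,1)$, $E_p$ is expectation over $p\sim\mathcal{P}$; $\sigma(p)=\sqrt{(1-p)/p}$; $f_{\ell,x}(p)=p^x(1-p)^{\ell-x}(x\sigma(p)-(\ell-x)\sigma(1-p))$; $R_{\ell,x}=\max\{0,E_p[f_{\ell,x}(p)]\}$; $\mathcal{R}_{\ell,\mathcal{P}}=E_p[-f_{\ell,0}(p)]-\sum_{x=1}^{\ell-1}\binom{\ell}{x}R_{\ell,x}$. Gauss–Legendre distribution: for $c=2\nu$, let $\widetilde{L}_\nu(t)=\left.\left(\frac{d}{du}\right)^{\nu}(u^2-1)^{\nu}\right|_{u=2t-1}$; $\mathcal{P}_c$ takes as values the $\nu$ zeroes $p$ of $\widetilde L_\nu$ (all in $(0,1)$), each with probability proportional to $\bigl((p(1-p))^{3/2}\widetilde L_\nu{}'(p)^2\bigr)^{-1}$, normalized to total probability $1$. *)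

theory Defs
  imports "HOL-Analysis.Analysis" "HOL-Computational_Algebra.Polynomial"
begin

text \<open>A distribution on a finite subset of (0,1) is represented by its expectation
  operator E :: (real \<Rightarrow> real) \<Rightarrow> real.\<close>

definition sigma :: "real \<Rightarrow> real" where
  "sigma p = sqrt ((1 - p) / p)"

definition fLX :: "nat \<Rightarrow> nat \<Rightarrow> real \<Rightarrow> real" where
  "fLX l x p = p ^ x * (1 - p) ^ (l - x) *
      (real x * sigma p - real (l - x) * sigma (1 - p))"

definition R_lx :: "((real \<Rightarrow> real) \<Rightarrow> real) \<Rightarrow> nat \<Rightarrow> nat \<Rightarrow> real" where
  "R_lx E l x = max 0 (E (fLX l x))"

definition calR :: "nat \<Rightarrow> ((real \<Rightarrow> real) \<Rightarrow> real) \<Rightarrow> real" where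
  "calR l E = E (\<lambda>p. - fLX l 0 p) - (\<Sum>x = 1..l - 1. real (l choose x) * R_lx E l x)"

definition legendre_shift :: "nat \<Rightarrow> real poly" where
  "legendre_shift \<nu> = pcompose (((pderiv :: real poly \<Rightarrow> real poly) ^^ \<nu>) ([:-1, 0, 1:] ^ \<nu>)) [:-1, 2:]"

definition GL_weight :: "nat \<Rightarrow> real \<Rightarrow> real" where
  "GL_weight \<nu> p = 1 / ((p * (1 - p)) powr (3/2) * (poly (pderiv (legendre_shift \<nu>)) p)\<^sup>2)"

definition GL_support :: "nat \<Rightarrow> real set" where
  "GL_support \<nu> = {p. poly (legendre_shift \<nu>) p = 0}"

definition GL_E :: "nat \<Rightarrow> (real \<Rightarrow> real) \<Rightarrow> real" where
  "GL_E c g = (let \<nu> = c div 2 in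
     (\<Sum>p\<in>GL_support \<nu>. GL_weight \<nu> p * g p) / (\<Sum>p\<in>GL_support \<nu>. GL_weight \<nu> p))"

end

theory Submission
  imports Defs "HOL-Real_Asymp.Real_Asymp"
begin


definition pint :: "real poly \<Rightarrow> real poly" where
  "pint p = Poly (0 # map (\<lambda>k. coeff p k / real (Suc k)) [0..<Suc (degree p)])"

lemma pderiv_pint: "pderiv (pint p) = p"
proof (rule poly_eqI)
  fix n
  show "coeff (pderiv (pint p)) n = coeff p n"
    unfolding coeff_pderiv pint_def coeff_Poly_eq
    by (cases "n \<le> degree p") (auto simp: nth_default_def nth_append coeff_eq_0 simp del: upt_Suc)
qed

definition Jf :: "real poly \<Rightarrow> real" where
  "Jf p = poly (pint p) 1 - poly (pint p) (-1)"

lemma Jf_pderiv: "Jf (pderiv q) = poly q 1 - poly q (-1)"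
proof -
  define d where "d = pint (pderiv q) - q"
  have "pderiv d = 0" by (simp add: d_def pderiv_diff pderiv_pint)
  hence "degree d = 0" by (simp add: pderiv_eq_0_iff)
  hence "d = [:coeff d 0:]" by (metis degree_eq_zeroE coeff_pCons_0)
  hence "poly d 1 = poly d (-1)" by (metis poly_pCons mult_zero_right poly_0 add.right_neutral)
  thus ?thesis by (simp add: Jf_def d_def)
qed

lemma Jf_add: "Jf (p + q) = Jf p + Jf q"
proof -
  have "p + q = pderiv (pint p + pint q)" by (simp add: pderiv_add pderiv_pint)
  hence "Jf (p + q) = poly (pint p + pint q) 1 - poly (pint p + pint q) (-1)" by (simp add: Jf_pderiv)
  thus ?thesis by (simp add: Jf_def)
qed

lemma Jf_smult: "Jf (smult c p) = c * Jf p"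
proof -
  have "smult c p = pderiv (smult c (pint p))" by (simp add: pderiv_smult pderiv_pint)
  hence "Jf (smult c p) = poly (smult c (pint p)) 1 - poly (smult c (pint p)) (-1)" by (simp add: Jf_pderiv)
  thus ?thesis by (simp add: Jf_def algebra_simps)
qed

lemma Jf_0[simp]: "Jf 0 = 0" using Jf_smult[of 0 0] by simp

lemma Jf_minus: "Jf (- p) = - Jf p" using Jf_smult[of "-1" p] by simp

lemma Jf_diff: "Jf (p - q) = Jf p - Jf q" using Jf_add[of p "-q"] Jf_minus[of q] by simp

lemma Jf_sum: "Jf (sum f A) = (\<Sum>a\<in>A. Jf (f a))"
  by (induction A rule: infinite_finite_induct) (auto simp: Jf_add)


lemma funpow_pderiv_Suc: "(pderiv ^^ Suc k) p = pderiv ((pderiv ^^ k) p)"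
  by simp

lemma pderiv_linpow_mult:
  fixes a :: real
  assumes "k \<le> n"
  shows "\<exists>Q. (pderiv ^^ k) ([:-a,1:]^n * q) = [:-a,1:]^(n-k) * Q \<and>
             poly Q a = fact n / fact (n-k) * poly q a"
  using assms
proof (induction k)
  case 0 thus ?case by auto
next
  case (Suc k)
  then obtain Q where Q: "(pderiv ^^ k) ([:-a,1:]^n * q) = [:-a,1:]^(n-k) * Q"
     "poly Q a = fact n / fact (n-k) * poly q a" by auto
  obtain m where m: "n - k = Suc m" using Suc.prems by (metis Suc_diff_le Suc_le_lessD diff_Suc_Suc less_imp_Suc_add add_diff_cancel_left')
  define Q' where "Q' = smult (of_nat (Suc m)) Q + [:-a,1:] * pderiv Q"
  have "(pderiv ^^ Suc k) ([:-a,1:]^n * q) = pderiv ([:-a,1:]^(Suc m) * Q)"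
    using Q m by simp
  also have "\<dots> = [:-a,1:]^m * Q'"
  proof -
    have d: "pderiv [:-a,1:] = 1" by (simp add: pderiv_pCons)
    show ?thesis unfolding pderiv_mult pderiv_power_Suc d Q'_def
      by (simp add: algebra_simps)
  qed
  moreover have "n - Suc k = m" using m by simp
  ultimately have 1: "(pderiv ^^ Suc k) ([:-a,1:]^n * q) = [:-a,1:]^(n - Suc k) * Q'"
    by simp
  have "fact (n - k) = real (Suc m) * fact (n - Suc k)"
    using m \<open>n - Suc k = m\<close> by simp
  moreover have "poly Q' a = real (Suc m) * poly Q a" by (simp add: Q'_def)
  ultimately have "poly Q' a = real (Suc m) * (fact n / (real (Suc m) * fact (n - Suc k)) * poly q a)"
    using Q(2) by metis
  hence "poly Q' a = fact n / fact (n - Suc k) * poly q a"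
    by (simp del: of_nat_Suc)
  with 1 show ?case by blast
qed

definition Rod :: "nat \<Rightarrow> nat \<Rightarrow> real poly" where
  "Rod n k = (pderiv ^^ k) ([:-1,0,1:]^n)"

lemma quad_factor: "[:-1,0,1:] = [:-1,1:] * [:-(-1),1::real:]"
  by simp

lemma Rod_end_zero:
  assumes "k < n"
  shows "poly (Rod n k) 1 = 0" "poly (Rod n k) (-1) = 0"
proof -
  have e1: "[:-1,0,1:]^n = [:-1,1:]^n * [:-(-1),1::real:]^n"
    by (metis quad_factor power_mult_distrib)
  obtain Q where "Rod n k = [:-1,1:]^(n-k) * Q"
    using pderiv_linpow_mult[of k n 1 "[:-(-1),1:]^n"] assms unfolding Rod_def e1 by auto
  moreover have "n - k > 0" using assms by simp
  ultimately show "poly (Rod n k) 1 = 0" by (simp add: poly_power zero_power)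
  have e2: "[:-1,0,1:]^n = [:-(-1),1:]^n * [:-1,1::real:]^n"
    by (metis quad_factor power_mult_distrib mult.commute)
  obtain Q where "Rod n k = [:-(-1),1:]^(n-k) * Q"
    using pderiv_linpow_mult[of k n "-1" "[:-1,1:]^n"] assms unfolding Rod_def e2 by auto
  with \<open>n - k > 0\<close> show "poly (Rod n k) (-1) = 0" by (simp add: poly_power zero_power)
qed

lemma Rod_at_1: "poly (Rod n n) 1 = fact n * 2^n"
proof -
  have e1: "[:-1,0,1:]^n = [:-1,1:]^n * [:-(-1),1::real:]^n"
    by (metis quad_factor power_mult_distrib)
  obtain Q where "Rod n n = [:-1,1:]^(n-n) * Q" "poly Q 1 = fact n / fact (n-n) * poly ([:-(-1),1:]^n) 1"
    using pderiv_linpow_mult[of n n 1 "[:-(-1),1:]^n"] unfolding Rod_def e1 by auto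
  thus ?thesis by (simp add: poly_power)
qed


lemma degree_Rod: "k \<le> 2*n \<Longrightarrow> degree (Rod n k) = 2*n - k"
proof (induction k)
  case 0
  have "degree ([:-1,0,1::real:]^n) = n * 2" by (simp add: degree_power_eq)
  thus ?case by (simp add: Rod_def)
next
  case (Suc k)
  thus ?case by (simp add: Rod_def degree_pderiv)
qed

lemma Rod_Suc: "Rod n (Suc k) = pderiv (Rod n k)"
  by (simp add: Rod_def)

lemma poly_Rolle:
  fixes p :: "real poly"
  assumes "a < b" "poly p a = 0" "poly p b = 0"
  shows "\<exists>z. a < z \<and> z < b \<and> poly (pderiv p) z = 0"
proof -
  have "\<exists>z>a. z < b \<and> (poly p has_real_derivative 0) (at z)"
  proof (rule Rolle)
    show "continuous_on {a..b} (poly p)" by (intro continuous_intros)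
    show "poly p differentiable at x" for x
      using poly_DERIV[of p x] unfolding real_differentiable_def by blast
  qed (use assms in auto)
  then obtain z where z: "a < z" "z < b" "(poly p has_real_derivative 0) (at z)" by blast
  have "(poly p has_real_derivative poly (pderiv p) z) (at z)" by (rule poly_DERIV)
  with z(3) have "poly (pderiv p) z = 0" using DERIV_unique by blast
  with z show ?thesis by blast
qed

lemma chain_mono:
  fixes y :: "nat \<Rightarrow> real"
  assumes "\<forall>j<m. y j < y (Suc j)" "i < j" "j \<le> m"
  shows "y i < y j"
  using assms(2,3)
proof (induction j)
  case 0 thus ?case by simp
next
  case (Suc j)
  show ?case
  proof (cases "i = j")
    case True thus ?thesis using assms(1) Suc.prems by auto
  next
    case False
    hence "y i < y j" using Suc by auto
    thus ?thesis using assms(1) Suc.prems by (meson Suc_le_lessD less_trans)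
  qed
qed

lemma Rod_roots:
  assumes "k \<le> n"
  shows "\<exists>y::nat\<Rightarrow>real. (\<forall>j\<le>k. y j < y (Suc j)) \<and> y 0 = -1 \<and> y (Suc k) = 1 \<and>
           (\<forall>j\<in>{1..k}. poly (Rod n k) (y j) = 0)"
  using assms
proof (induction k)
  case 0
  show ?case by (rule exI[of _ "\<lambda>j. if j = 0 then -1 else 1"]) auto
next
  case (Suc k)
  then obtain y where y: "\<forall>j\<le>k. y j < y (Suc j)" "y 0 = -1" "y (Suc k) = 1"
    "\<forall>j\<in>{1..k}. poly (Rod n k) (y j) = 0" by auto
  have kn: "k < n" using Suc.prems by simp
  have rt: "poly (Rod n k) (y j) = 0" if "j \<le> Suc k" for j
  proof -
    have "j = 0 \<or> j = Suc k \<or> j \<in> {1..k}" using that by auto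
    thus ?thesis
      using y Rod_end_zero[OF kn] by auto
  qed
  have "\<forall>j\<le>k. \<exists>z. y j < z \<and> z < y (Suc j) \<and> poly (Rod n (Suc k)) z = 0"
  proof (intro allI impI)
    fix j assume "j \<le> k"
    thus "\<exists>z. y j < z \<and> z < y (Suc j) \<and> poly (Rod n (Suc k)) z = 0"
      using poly_Rolle[of "y j" "y (Suc j)" "Rod n k"] y(1) rt[of j] rt[of "Suc j"]
      by (auto simp: Rod_Suc)
  qed
  then obtain z where z: "\<forall>j\<le>k. y j < z j \<and> z j < y (Suc j) \<and> poly (Rod n (Suc k)) (z j) = 0"
    by metis
  define y' where "y' i = (if i = 0 then -1 else if i = Suc (Suc k) then 1 else z (i - 1))" for i
  have "\<forall>j\<le>Suc k. y' j < y' (Suc j)"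
  proof (intro allI impI)
    fix j assume j: "j \<le> Suc k"
    have "j = 0 \<or> j = Suc k \<or> j \<in> {1..k}" using j by auto
    then consider "j = 0" | "j = Suc k" | "j \<in> {1..k}" by blast
    thus "y' j < y' (Suc j)"
    proof cases
      case 1 thus ?thesis using z y(2) by (auto simp: y'_def)
    next
      case 2 thus ?thesis using z y(3) by (auto simp: y'_def)
    next
      case 3
      hence j1: "j - 1 \<le> k" "Suc (j - 1) = j" "j \<le> k" by auto
      have "z (j - 1) < y (Suc (j - 1))" using z j1(1) by blast
      hence "z (j - 1) < y j" using j1(2) by simp
      moreover have "y j < z j" using z j1(3) by blast
      ultimately have "z (j - 1) < y j" "y j < z j" by auto
      thus ?thesis using 3 by (auto simp: y'_def)
    qed
  qed
  moreover have "\<forall>j\<in>{1..Suc k}. poly (Rod n (Suc k)) (y' j) = 0"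
    using z by (auto simp: y'_def)
  ultimately show ?case by (intro exI[of _ y']) (auto simp: y'_def)
qed

definition Ynodes :: "nat \<Rightarrow> real set" where
  "Ynodes n = {x. poly (Rod n n) x = 0}"

lemma Rod_n_nonzero: "n \<ge> 1 \<Longrightarrow> Rod n n \<noteq> 0"
  using degree_Rod[of n n] by auto

lemma Rod_Sn_nonzero: "n \<ge> 1 \<Longrightarrow> Rod n (Suc n) \<noteq> 0"
  using degree_Rod[of n n] by (auto simp: Rod_Suc pderiv_eq_0_iff)

lemma Ynodes_props:
  assumes n: "n \<ge> 1"
  shows "finite (Ynodes n)" "card (Ynodes n) = n" "Ynodes n \<subseteq> {-1<..<1}"
        "\<And>x. x \<in> Ynodes n \<Longrightarrow> poly (Rod n (Suc n)) x \<noteq> 0"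
proof -
  obtain y where y: "\<forall>j\<le>n. y j < y (Suc j)" "y 0 = -1" "y (Suc n) = 1"
           "\<forall>j\<in>{1..n}. poly (Rod n n) (y j) = 0"
    using Rod_roots[of n n] by blast
  have lt: "i < j \<Longrightarrow> j \<le> Suc n \<Longrightarrow> y i < y j" for i j
    using chain_mono[of "Suc n" y i j] y(1) by auto
  have inj: "inj_on y {1..n}"
  proof (rule inj_onI)
    fix a b assume ab: "a \<in> {1..n}" "b \<in> {1..n}" "y a = y b"
    show "a = b"
    proof (rule ccontr)
      assume "a \<noteq> b"
      hence "a < b \<or> b < a" by linarith
      thus False using lt[of a b] lt[of b a] ab by auto
    qed
  qed
  have fin: "finite (Ynodes n)" unfolding Ynodes_def by (rule poly_roots_finite[OF Rod_n_nonzero[OF n]])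
  have sub: "y ` {1..n} \<subseteq> Ynodes n" using y(4) by (auto simp: Ynodes_def)
  have c1: "card (y ` {1..n}) = n" using inj by (simp add: card_image)
  have c2: "card (Ynodes n) \<le> n"
    using card_poly_roots_bound[OF Rod_n_nonzero[OF n]] degree_Rod[of n n] by (simp add: Ynodes_def)
  have eq: "y ` {1..n} = Ynodes n"
    using card_subset_eq[OF fin sub] c1 c2 card_mono[OF fin sub] by simp
  show "finite (Ynodes n)" by (rule fin)
  show "card (Ynodes n) = n" using eq c1 by simp
  show "Ynodes n \<subseteq> {-1<..<1}"
  proof
    fix x assume "x \<in> Ynodes n"
    from this eq obtain j where j: "j \<in> {1..n}" "x = y j" by blast
    have "y 0 < y j" "y j < y (Suc n)" using lt[of 0 j] lt[of j "Suc n"] j(1) by auto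
    thus "x \<in> {-1<..<1}" using y j by auto
  qed
  have "\<forall>j\<in>{1..<n}. \<exists>z. y j < z \<and> z < y (Suc j) \<and> poly (Rod n (Suc n)) z = 0"
  proof
    fix j assume j: "j \<in> {1..<n}"
    have j1: "j \<le> n" "j \<in> {1..n}" "Suc j \<in> {1..n}" using j by auto
    have h1: "y j < y (Suc j)" using y(1) j1(1) by blast
    have h2: "poly (Rod n n) (y j) = 0" using y(4) j1(2) by blast
    have h3: "poly (Rod n n) (y (Suc j)) = 0" using y(4) j1(3) by blast
    show "\<exists>z. y j < z \<and> z < y (Suc j) \<and> poly (Rod n (Suc n)) z = 0"
      using poly_Rolle[OF h1 h2 h3] unfolding Rod_Suc .
  qed
  from bchoice[OF this] obtain z where z: "\<forall>j\<in>{1..<n}. y j < z j \<and> z j < y (Suc j) \<and> poly (Rod n (Suc n)) (z j) = 0"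
    ..
  fix x assume x: "x \<in> Ynodes n"
  from this eq obtain i where i: "i \<in> {1..n}" "x = y i" by blast
  show "poly (Rod n (Suc n)) x \<noteq> 0"
  proof
    assume r: "poly (Rod n (Suc n)) x = 0"
    have zinj: "inj_on z {1..<n}"
    proof (rule inj_onI)
      fix a b assume ab: "a \<in> {1..<n}" "b \<in> {1..<n}" "z a = z b"
      show "a = b"
      proof (rule ccontr)
        assume "a \<noteq> b"
        then consider "a < b" | "b < a" by linarith
        thus False
        proof cases
          case 1
          have "z a < y (Suc a)" "y b < z b" using bspec[OF z ab(1)] bspec[OF z ab(2)] by auto
          moreover have "y (Suc a) \<le> y b" using lt[of "Suc a" b] 1 ab by (cases "Suc a = b") auto
          ultimately show False using ab by simp
        next
          case 2
          have "z b < y (Suc b)" "y a < z a" using bspec[OF z ab(1)] bspec[OF z ab(2)] by auto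
          moreover have "y (Suc b) \<le> y a" using lt[of "Suc b" a] 2 ab by (cases "Suc b = a") auto
          ultimately show False using ab by simp
        qed
      qed
    qed
    have xnot: "x \<notin> z ` {1..<n}"
    proof
      assume "x \<in> z ` {1..<n}"
      then obtain j where j: "j \<in> {1..<n}" "x = z j" by auto
      have a: "y j < y i" "y i < y (Suc j)" using bspec[OF z j(1)] j(2) i(2) by auto
      show False
      proof (cases "i \<le> j")
        case True thus False using a lt[of i j] j by (cases "i = j") auto
      next
        case False
        hence "Suc j \<le> i" by simp
        thus False using a lt[of "Suc j" i] i by (cases "Suc j = i") auto
      qed
    qed
    have "insert x (z ` {1..<n}) \<subseteq> {x. poly (Rod n (Suc n)) x = 0}" using z r by blast
    hence "card (insert x (z ` {1..<n})) \<le> card {x. poly (Rod n (Suc n)) x = 0}"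
      by (intro card_mono poly_roots_finite Rod_Sn_nonzero n)
    also have "\<dots> \<le> degree (Rod n (Suc n))" by (intro card_poly_roots_bound Rod_Sn_nonzero n)
    also have "\<dots> = n - 1" using degree_Rod[of "Suc n" n] n by simp
    finally have "card (insert x (z ` {1..<n})) \<le> n - 1" .
    moreover have "card (insert x (z ` {1..<n})) = n" using xnot zinj n by (simp add: card_image)
    ultimately show False using n by simp
  qed
qed


lemma funpow_pderiv_Suc': "(pderiv ^^ Suc k) p = (pderiv ^^ k) (pderiv p)"
  by (simp add: funpow_Suc_right del: funpow.simps)

lemma funpow_pderiv_0: "(pderiv ^^ k) 0 = (0::real poly)"
  by (induction k) auto

lemma funpow_pderiv_deg: "degree (s::real poly) < k \<Longrightarrow> (pderiv ^^ k) s = 0"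
proof (induction k arbitrary: s)
  case 0 thus ?case by simp
next
  case (Suc k)
  show ?case
  proof (cases "degree s = 0")
    case True
    hence "pderiv s = 0" by (simp add: pderiv_eq_0_iff)
    thus ?thesis by (simp only: funpow_pderiv_Suc' funpow_pderiv_0)
  next
    case False
    hence "degree (pderiv s) < k" using Suc.prems by (simp add: degree_pderiv)
    thus ?thesis using Suc.IH[of "pderiv s"] by (simp only: funpow_pderiv_Suc')
  qed
qed

lemma funpow_pderiv_smult: "(pderiv ^^ k) (smult c p) = smult c ((pderiv ^^ k) p)"
  by (induction k) (auto simp: pderiv_smult)

lemma funpow_pderiv_add: "(pderiv ^^ k) (p + q) = (pderiv ^^ k) p + (pderiv ^^ k) (q::real poly)"
  by (induction k) (auto simp: pderiv_add)

lemma Rod_orth_aux: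
  assumes "k \<le> n"
  shows "Jf (Rod n k * s) = (-1)^k * Jf ([:-1,0,1:]^n * (pderiv ^^ k) s)"
  using assms
proof (induction k arbitrary: s)
  case 0 thus ?case by (simp add: Rod_def)
next
  case (Suc k)
  have kn: "k < n" using Suc.prems by simp
  have "Rod n (Suc k) * s = pderiv (Rod n k * s) - Rod n k * pderiv s"
    by (simp add: Rod_Suc pderiv_mult)
  hence "Jf (Rod n (Suc k) * s) = Jf (pderiv (Rod n k * s)) - Jf (Rod n k * pderiv s)"
    by (simp add: Jf_diff)
  also have "Jf (pderiv (Rod n k * s)) = 0"
    using Rod_end_zero[OF kn] by (simp add: Jf_pderiv)
  also have "Jf (Rod n k * pderiv s) = (-1)^k * Jf ([:-1,0,1:]^n * (pderiv ^^ Suc k) s)"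
    using Suc.IH[of "pderiv s"] kn by (simp add: funpow_swap1)
  finally show ?case by simp
qed

lemma Rod_orth:
  assumes "degree s < n"
  shows "Jf (Rod n n * s) = 0"
  using Rod_orth_aux[of n n s] funpow_pderiv_deg[OF assms] by simp

definition Xp :: "real poly" where "Xp = [:0,1:]"
definition Qp :: "real poly" where "Qp = [:-1,0,1:]"

lemma pderiv_x: "pderiv Xp = 1"
  by (simp add: pderiv_pCons Xp_def)

lemma pderiv_q: "pderiv Qp = 2 * Xp"
proof -
  have "pderiv Qp = smult 2 Xp" by (simp add: pderiv_pCons Xp_def Qp_def)
  also have "smult 2 Xp = 2 * Xp" by (metis of_nat_numeral of_nat_mult_conv_smult)
  finally show ?thesis .
qed

lemma pderiv_1: "pderiv (1::real poly) = 0"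
  by (simp add: pderiv_pCons one_pCons)

lemma pderiv_cmul: "pderiv (of_nat c * p) = of_nat c * pderiv (p::real poly)"
  by (simp add: pderiv_mult pderiv_of_nat del: of_nat_mult_conv_smult)

lemma leib_lin:
  "(pderiv ^^ Suc k) (Xp * f) =
     Xp * (pderiv ^^ Suc k) f + of_nat (Suc k) * ((pderiv ^^ k) f)"
proof (induction k)
  case 0 thus ?case by (simp add: pderiv_mult pderiv_x del: of_nat_mult_conv_smult)
next
  case (Suc k)
  have "(pderiv ^^ Suc (Suc k)) (Xp * f) = pderiv ((pderiv ^^ Suc k) (Xp * f))"
    by (rule funpow_pderiv_Suc)
  also have "\<dots> = pderiv (Xp * (pderiv ^^ Suc k) f + of_nat (Suc k) * ((pderiv ^^ k) f))"
    using Suc.IH by simp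
  also have "\<dots> = Xp * (pderiv ^^ Suc (Suc k)) f + of_nat (Suc (Suc k)) * ((pderiv ^^ Suc k) f)"
    by (simp add: pderiv_add pderiv_mult pderiv_x pderiv_cmul algebra_simps del: of_nat_mult_conv_smult)
  finally show ?case .
qed

lemma leib_quad:
  "(pderiv ^^ Suc (Suc k)) (Qp * f) =
     Qp * (pderiv ^^ Suc (Suc k)) f
     + 2 * of_nat (k+2) * (Xp * (pderiv ^^ Suc k) f)
     + of_nat ((k+2)*(k+1)) * ((pderiv ^^ k) f)"
proof (induction k)
  case 0
  have "(pderiv ^^ Suc (Suc 0)) (Qp * f) = pderiv (pderiv (Qp * f))"
    by simp
  also have "\<dots> = Qp * pderiv (pderiv f) + 4 * (Xp * pderiv f) + 2 * f"
    by (simp add: pderiv_add pderiv_mult pderiv_q pderiv_x algebra_simps del: of_nat_mult_conv_smult)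
  finally show ?case by (simp add: numeral_eq_Suc del: of_nat_mult_conv_smult)
next
  case (Suc k)
  have "(pderiv ^^ Suc (Suc (Suc k))) (Qp * f) = pderiv ((pderiv ^^ Suc (Suc k)) (Qp * f))"
    by (rule funpow_pderiv_Suc)
  also have "\<dots> = pderiv (Qp * (pderiv ^^ Suc (Suc k)) f
     + 2 * of_nat (k+2) * (Xp * (pderiv ^^ Suc k) f)
     + of_nat ((k+2)*(k+1)) * ((pderiv ^^ k) f))"
    using Suc.IH by simp
  also have "\<dots> = Qp * (pderiv ^^ Suc (Suc (Suc k))) f
     + 2 * of_nat (Suc k+2) * (Xp * (pderiv ^^ Suc (Suc k)) f)
     + of_nat ((Suc k+2)*(Suc k+1)) * ((pderiv ^^ Suc k) f)"
    by (simp add: pderiv_add pderiv_mult pderiv_q pderiv_x pderiv_cmul algebra_simps del: of_nat_mult_conv_smult)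
  finally show ?case .
qed

lemma funpow_pderiv_cmul: "(pderiv ^^ k) (of_nat c * p) = of_nat c * (pderiv ^^ k) (p::real poly)"
  by (induction k) (auto simp: pderiv_cmul simp del: of_nat_mult_conv_smult)

lemma Rod_ODE_Suc:
  "Qp * Rod (Suc m) (Suc (Suc (Suc m))) + 2 * Xp * Rod (Suc m) (Suc (Suc m)) = of_nat (Suc m*(Suc m+1)) * Rod (Suc m) (Suc m)"
proof -
  define n where "n = Suc m"
  define w where "w = Qp ^ n"
  have Rw: "Rod n k = (pderiv ^^ k) w" for k by (simp add: Rod_def w_def Qp_def)
  have "pderiv w = of_nat n * (Qp ^ m * (2 * Xp))"
    unfolding w_def n_def pderiv_power_Suc pderiv_q of_nat_mult_conv_smult by simp
  hence e: "Qp * pderiv w = of_nat (2*n) * (Xp * w)"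
    by (simp add: w_def n_def algebra_simps del: of_nat_mult_conv_smult)
  have dpw: "(pderiv ^^ j) (pderiv w) = Rod n (Suc j)" for j
    by (simp add: Rw funpow_swap1)
  have "(pderiv ^^ Suc (Suc m)) (Qp * pderiv w) = (pderiv ^^ Suc (Suc m)) (of_nat (2*n) * (Xp * w))"
    using e by simp
  hence "Qp * Rod n (Suc (Suc n)) + 2 * of_nat (m+2) * (Xp * Rod n (Suc n)) + of_nat ((m+2)*(m+1)) * Rod n n
       = of_nat (2*n) * (Xp * Rod n (Suc n) + of_nat (Suc n) * Rod n n)"
    unfolding leib_quad funpow_pderiv_cmul
    by (simp add: dpw leib_lin Rw[symmetric] n_def del: of_nat_mult_conv_smult funpow.simps)
  thus ?thesis unfolding n_def by (simp add: algebra_simps del: of_nat_mult_conv_smult)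
qed

lemma Rod_ODE:
  assumes "n \<ge> 1"
  shows "Qp * Rod n (Suc (Suc n)) + 2 * Xp * Rod n (Suc n) = of_nat (n*(n+1)) * Rod n n"
  using Rod_ODE_Suc[of "n - 1"] assms by (cases n) auto

lemma Rod_ODE_pt:
  assumes "n \<ge> 1"
  shows "(t^2 - 1) * poly (Rod n (Suc (Suc n))) t + 2 * t * poly (Rod n (Suc n)) t
         = real (n*(n+1)) * poly (Rod n n) t"
proof -
  have "poly (Qp * Rod n (Suc (Suc n)) + 2 * Xp * Rod n (Suc n)) t = poly (of_nat (n*(n+1)) * Rod n n) t"
    using Rod_ODE[OF assms] by simp
  thus ?thesis by (simp add: Qp_def Xp_def power2_eq_square algebra_simps del: of_nat_mult_conv_smult)
qed


definition qf :: "nat \<Rightarrow> real \<Rightarrow> real poly" where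
  "qf n y = Rod n n div [:-y,1:]"

definition lam :: "nat \<Rightarrow> real \<Rightarrow> real" where
  "lam n y = Jf (qf n y) / poly (Rod n (Suc n)) y"

lemma qf_eq:
  assumes "y \<in> Ynodes n"
  shows "Rod n n = [:-y,1:] * qf n y"
proof -
  have "[:-y,1:] dvd Rod n n" using assms by (simp add: Ynodes_def poly_eq_0_iff_dvd)
  thus ?thesis unfolding qf_def by (rule dvd_mult_div_cancel[symmetric])
qed

lemma qf_at:
  assumes "y \<in> Ynodes n"
  shows "poly (qf n y) y = poly (Rod n (Suc n)) y"
proof -
  have "Rod n (Suc n) = pderiv ([:-y,1:] * qf n y)" using qf_eq[OF assms] by (simp add: Rod_Suc)
  also have "\<dots> = qf n y + [:-y,1:] * pderiv (qf n y)"
  proof -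
    have d: "pderiv [:-y,1:] = 1" by (simp add: pderiv_pCons)
    show ?thesis unfolding pderiv_mult d by simp
  qed
  finally show ?thesis by simp
qed

lemma qf_other:
  assumes "y \<in> Ynodes n" "z \<in> Ynodes n" "z \<noteq> y"
  shows "poly (qf n y) z = 0"
proof -
  have "0 = poly (Rod n n) z" using assms(2) by (simp add: Ynodes_def)
  also have "\<dots> = (z - y) * poly (qf n y) z" by (subst qf_eq[OF assms(1)]) (simp add: algebra_simps)
  finally show ?thesis using assms(3) by simp
qed

lemma deg_qf:
  assumes "n \<ge> 1" "y \<in> Ynodes n"
  shows "degree (qf n y) = n - 1"
proof -
  have nz: "qf n y \<noteq> 0" using qf_eq[OF assms(2)] Rod_n_nonzero[OF assms(1)] by auto
  have "n = degree (Rod n n)" using degree_Rod[of n n] by simp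
  also have "\<dots> = degree ([:-y,1:] * qf n y)" using qf_eq[OF assms(2)] by simp
  also have "\<dots> = 1 + degree (qf n y)" using nz by (subst degree_mult_eq) auto
  finally show ?thesis by simp
qed

lemma interp:
  assumes n: "n \<ge> 1" and r: "degree r < n"
  shows "(\<Sum>y\<in>Ynodes n. smult (poly r y / poly (Rod n (Suc n)) y) (qf n y)) = r"
proof (rule ccontr)
  define d where "d = (\<Sum>y\<in>Ynodes n. smult (poly r y / poly (Rod n (Suc n)) y) (qf n y)) - r"
  assume ne: "(\<Sum>y\<in>Ynodes n. smult (poly r y / poly (Rod n (Suc n)) y) (qf n y)) \<noteq> r"
  hence dnz: "d \<noteq> 0" by (simp add: d_def)
  have fin: "finite (Ynodes n)" using Ynodes_props(1)[OF n] .
  have "degree (\<Sum>y\<in>Ynodes n. smult (poly r y / poly (Rod n (Suc n)) y) (qf n y)) \<le> n - 1"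
  proof (rule degree_sum_le[OF fin])
    fix y assume y: "y \<in> Ynodes n"
    have "degree (smult (poly r y / poly (Rod n (Suc n)) y) (qf n y)) \<le> degree (qf n y)"
      by (rule degree_smult_le)
    thus "degree (smult (poly r y / poly (Rod n (Suc n)) y) (qf n y)) \<le> n - 1"
      using deg_qf[OF n y] by simp
  qed
  moreover have "degree d \<le> max (degree (\<Sum>y\<in>Ynodes n. smult (poly r y / poly (Rod n (Suc n)) y) (qf n y))) (degree r)"
    unfolding d_def by (rule degree_diff_le_max)
  ultimately have dd: "degree d < n" using r n by linarith
  have roots: "Ynodes n \<subseteq> {x. poly d x = 0}"
  proof
    fix z assume z: "z \<in> Ynodes n"
    have "poly (\<Sum>y\<in>Ynodes n. smult (poly r y / poly (Rod n (Suc n)) y) (qf n y)) z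
        = (\<Sum>y\<in>Ynodes n. poly r y / poly (Rod n (Suc n)) y * poly (qf n y) z)"
      by (simp add: poly_sum)
    also have "\<dots> = (\<Sum>y\<in>{z}. poly r y / poly (Rod n (Suc n)) y * poly (qf n y) z)"
      by (rule sum.mono_neutral_right) (use fin z qf_other[OF _ z] in auto)
    also have "\<dots> = poly r z"
      using qf_at[OF z] Ynodes_props(4)[OF n z] by simp
    finally show "z \<in> {x. poly d x = 0}" by (simp add: d_def)
  qed
  have "n = card (Ynodes n)" using Ynodes_props(2)[OF n] by simp
  also have "\<dots> \<le> card {x. poly d x = 0}" by (rule card_mono[OF poly_roots_finite[OF dnz] roots])
  also have "\<dots> \<le> degree d" by (rule card_poly_roots_bound[OF dnz])
  finally show False using dd by simp
qed

lemma exactness: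
  assumes n: "n \<ge> 1" and h: "degree h < 2*n"
  shows "(\<Sum>y\<in>Ynodes n. lam n y * poly h y) = Jf h"
proof -
  define R where "R = Rod n n"
  have Rnz: "R \<noteq> 0" using Rod_n_nonzero[OF n] by (simp add: R_def)
  have dR: "degree R = n" using degree_Rod[of n n] by (simp add: R_def)
  define q where "q = h div R"
  define r where "r = h mod R"
  have hqr: "h = q * R + r" by (simp add: q_def r_def)
  have dr: "degree r < n" using degree_mod_less[OF Rnz, of h] dR n by (auto simp: r_def)
  have dq: "degree q < n"
  proof (cases "q = 0")
    case True thus ?thesis using n by simp
  next
    case False
    have "degree q + n = degree (q * R)" using False Rnz dR by (simp add: degree_mult_eq)
    also have "q * R = h - r" using hqr by simp
    also have "degree (h - r) \<le> max (degree h) (degree r)" by (rule degree_diff_le_max)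
    finally show ?thesis using h dr by simp
  qed
  have "Jf h = Jf (R * q) + Jf r" using hqr by (simp add: Jf_add mult.commute)
  also have "Jf (R * q) = 0" using Rod_orth[OF dq] by (simp add: R_def)
  finally have Jh: "Jf h = Jf r" by simp
  have fin: "finite (Ynodes n)" using Ynodes_props(1)[OF n] .
  have "(\<Sum>y\<in>Ynodes n. lam n y * poly h y) = (\<Sum>y\<in>Ynodes n. lam n y * poly r y)"
  proof (rule sum.cong[OF refl])
    fix y assume "y \<in> Ynodes n"
    hence "poly R y = 0" by (simp add: Ynodes_def R_def)
    thus "lam n y * poly h y = lam n y * poly r y" by (subst hqr) simp
  qed
  also have "\<dots> = Jf (\<Sum>y\<in>Ynodes n. smult (poly r y / poly (Rod n (Suc n)) y) (qf n y))"
    by (simp add: Jf_sum Jf_smult lam_def mult_ac)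
  also have "\<dots> = Jf r" using interp[OF n dr] by simp
  finally show ?thesis using Jh by simp
qed


lemma poly_h:
  fixes q :: "real poly"
  shows "poly (pderiv ([:1,1:] * q^2)) z = poly q z ^ 2 + (1 + z) * (2 * poly q z * poly (pderiv q) z)"
proof -
  have d: "pderiv [:1,1::real:] = 1" by (simp add: pderiv_pCons)
  have "pderiv ([:1,1:] * q^2) = q^2 + [:1,1:] * (smult 2 (q * pderiv q))"
    unfolding pderiv_mult d by (simp add: pderiv_power)
  thus ?thesis by (simp add: algebra_simps)
qed

lemma alg6:
  fixes P a d e :: real
  assumes "a \<noteq> 0" "d \<noteq> 0" "e \<noteq> 0"
  shows "2 * (P / d)^2 / (a^2 * e / d) = 2 * P^2 / ((d * e) * a^2)"
  using assms by (simp add: field_simps power2_eq_square)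

lemma christoffel:
  assumes n: "n \<ge> 1" and y: "y \<in> Ynodes n"
  shows "lam n y = 2 * (poly (Rod n n) 1)^2 / ((1 - y^2) * (poly (Rod n (Suc n)) y)^2)"
proof -
  define q where "q = qf n y"
  define h where "h = pderiv ([:1,1:] * q^2)"
  have fin: "finite (Ynodes n)" using Ynodes_props(1)[OF n] .
  have yin: "-1 < y" "y < 1" using Ynodes_props(3)[OF n] y by auto
  have a0: "poly (Rod n (Suc n)) y \<noteq> 0" using Ynodes_props(4)[OF n y] .
  have dq: "degree q = n - 1" using deg_qf[OF n y] by (simp add: q_def)
  have "degree ([:1,1:] * q^2) \<le> degree [:1,1::real:] + degree (q^2)" by (rule degree_mult_le)
  also have "degree (q^2) \<le> 2 * degree q" by (metis degree_power_le mult.commute)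
  finally have "degree ([:1,1:] * q^2) \<le> 1 + 2 * (n - 1)" using dq by simp
  hence dh: "degree h < 2 * n" unfolding h_def using n by (simp add: degree_pderiv)
  have ex: "(\<Sum>z\<in>Ynodes n. lam n z * poly h z) = Jf h" by (rule exactness[OF n dh])
  have "(\<Sum>z\<in>Ynodes n. lam n z * poly h z) = (\<Sum>z\<in>{y}. lam n z * poly h z)"
  proof (rule sum.mono_neutral_right[OF fin])
    show "{y} \<subseteq> Ynodes n" using y by simp
    show "\<forall>z\<in>Ynodes n - {y}. lam n z * poly h z = 0"
    proof
      fix z assume z: "z \<in> Ynodes n - {y}"
      have "poly q z = 0" using qf_other[OF y] z by (auto simp: q_def)
      hence "poly h z = 0" unfolding h_def poly_h by simp
      thus "lam n z * poly h z = 0" by simp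
    qed
  qed
  hence s1: "Jf h = lam n y * poly h y" using ex by simp
  have R1: "poly (Rod n n) 1 = (1 - y) * poly q 1"
    by (subst qf_eq[OF y]) (simp add: q_def algebra_simps)
  have "Jf h = poly ([:1,1:] * q^2) 1 - poly ([:1,1:] * q^2) (-1)" by (simp add: h_def Jf_pderiv)
  also have "\<dots> = 2 * (poly q 1)^2" by simp
  finally have Jh: "Jf h = 2 * (poly (Rod n n) 1 / (1 - y))^2" using R1 yin by simp
  have qy: "poly q y = poly (Rod n (Suc n)) y" using qf_at[OF y] by (simp add: q_def)
  have "Rod n (Suc (Suc n)) = pderiv (pderiv ([:-y,1:] * q))"
    using qf_eq[OF y] by (simp add: Rod_Suc q_def)
  also have "\<dots> = 2 * pderiv q + [:-y,1:] * pderiv (pderiv q)"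
  proof -
    have d: "pderiv [:-y,1::real:] = 1" by (simp add: pderiv_pCons)
    show ?thesis unfolding pderiv_mult d pderiv_add by (simp add: algebra_simps pderiv_1)
  qed
  finally have q'y: "poly (pderiv q) y = poly (Rod n (Suc (Suc n))) y / 2" by simp
  have ode: "(y^2 - 1) * poly (Rod n (Suc (Suc n))) y + 2 * y * poly (Rod n (Suc n)) y = 0"
    using Rod_ODE_pt[OF n, of y] y by (simp add: Ynodes_def)
  define a where "a = poly (Rod n (Suc n)) y"
  define b where "b = poly (Rod n (Suc (Suc n))) y"
  have ode': "(1 + y) * b = 2 * y * a / (1 - y)"
    using ode yin unfolding a_def[symmetric] b_def[symmetric]
    by (simp add: field_simps power2_eq_square)
  have "poly h y = a^2 + (1 + y) * (a * b)"
    unfolding h_def poly_h qy q'y a_def[symmetric] b_def[symmetric] by simp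
  also have "\<dots> = a^2 + a * ((1 + y) * b)" by (simp add: algebra_simps)
  also have "\<dots> = a^2 * (1 + y) / (1 - y)" unfolding ode' using yin by (simp add: field_simps power2_eq_square)
  finally have hy: "poly h y = a^2 * (1 + y) / (1 - y)" .
  define C where "C = a^2 * (1 + y) / (1 - y)"
  define D where "D = 2 * (poly (Rod n n) 1 / (1 - y))^2"
  have c: "lam n y * C = D"
    using s1 Jh hy by (simp add: C_def D_def)
  moreover have nz: "C \<noteq> 0" using yin a0 by (simp add: a_def C_def)
  ultimately have "lam n y = D / C"
    by (simp add: eq_divide_eq)
  hence "lam n y = 2 * (poly (Rod n n) 1 / (1 - y))^2 / (a^2 * (1 + y) / (1 - y))"
    by (simp add: C_def D_def)
  also have "\<dots> = 2 * (poly (Rod n n) 1)^2 / (((1 - y) * (1 + y)) * a^2)"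
    by (rule alg6) (use yin a0 in \<open>auto simp: a_def\<close>)
  also have "(1 - y) * (1 + y) = 1 - y^2" by (simp add: algebra_simps power2_eq_square)
  finally show ?thesis by (simp add: a_def)
qed



lemma sonin_core:
  fixes x P P1 P2 N a :: real
  assumes ode: "(x^2-1)*P2 + 2*x*P1 = N*P" and a: "a = N + 1/4"
  shows "(1-x^2)*(-4*x*(1-x^2)*P1^2 + 2*(1-x^2)^2*P1*P2 - (1-3*x^2)*P*P1 - (1-x^2)*x*(P1^2+P*P2)
          + (x/2-2*a*x)*P^2 + 2*((1+x^2)/4+a*(1-x^2))*P*P1)
        + x*((1-x^2)^2*P1^2 - (1-x^2)*x*P*P1 + ((1+x^2)/4 + a*(1-x^2))*P^2) = x*P^2/2"
proof -
  define Z where "Z = (1-x^2)*P2"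
  have Z: "Z = 2*x*P1 - N*P" using ode unfolding Z_def by (simp add: algebra_simps)
  have "(1-x^2)*(-4*x*(1-x^2)*P1^2 + 2*(1-x^2)^2*P1*P2 - (1-3*x^2)*P*P1 - (1-x^2)*x*(P1^2+P*P2)
          + (x/2-2*a*x)*P^2 + 2*((1+x^2)/4+a*(1-x^2))*P*P1)
        + x*((1-x^2)^2*P1^2 - (1-x^2)*x*P*P1 + ((1+x^2)/4 + a*(1-x^2))*P^2)
     = (1-x^2)*(-4*x*(1-x^2)*P1^2 + 2*(1-x^2)*P1*Z - (1-3*x^2)*P*P1 - (1-x^2)*x*P1^2 - x*P*Z
          + (x/2-2*a*x)*P^2 + 2*((1+x^2)/4+a*(1-x^2))*P*P1)
        + x*((1-x^2)^2*P1^2 - (1-x^2)*x*P*P1 + ((1+x^2)/4 + a*(1-x^2))*P^2)"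
    unfolding Z_def by (simp add: algebra_simps power2_eq_square)
  also have "\<dots> = x*P^2/2" unfolding Z a by (simp add: field_simps power2_eq_square)
  finally show ?thesis .
qed

definition Tf :: "nat \<Rightarrow> real \<Rightarrow> real" where
  "Tf n x = (let P = poly (Rod n n) x; P1 = poly (Rod n (Suc n)) x; a = (real n + 1/2)^2 in
     (1-x^2)^2*P1^2 - (1-x^2)*x*P*P1 + ((1+x^2)/4 + a*(1-x^2))*P^2)"

definition Tpf :: "nat \<Rightarrow> real \<Rightarrow> real" where
  "Tpf n x = (let P = poly (Rod n n) x; P1 = poly (Rod n (Suc n)) x; P2 = poly (Rod n (Suc (Suc n))) x;
     a = (real n + 1/2)^2 in
     -4*x*(1-x^2)*P1^2 + 2*(1-x^2)^2*P1*P2 - (1-3*x^2)*P*P1 - (1-x^2)*x*(P1^2+P*P2)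
          + (x/2-2*a*x)*P^2 + 2*((1+x^2)/4+a*(1-x^2))*P*P1)"

lemma Tf_deriv: "(Tf n has_real_derivative Tpf n x) (at x)"
proof -
  have dR: "(poly (Rod n n) has_real_derivative poly (Rod n (Suc n)) x) (at x)"
    using poly_DERIV[of "Rod n n" x] by (simp add: Rod_Suc)
  have dR1: "(poly (Rod n (Suc n)) has_real_derivative poly (Rod n (Suc (Suc n))) x) (at x)"
    using poly_DERIV[of "Rod n (Suc n)" x] by (simp add: Rod_Suc)
  show ?thesis
    unfolding Tf_def[abs_def] Tpf_def Let_def
    by (rule derivative_eq_intros dR dR1 refl | simp)+
      (simp add: algebra_simps power2_eq_square)
qed

lemma Tf_Tpf:
  assumes "n \<ge> 1"
  shows "(1-x^2) * Tpf n x + x * Tf n x = x * (poly (Rod n n) x)^2 / 2"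
  unfolding Tf_def Tpf_def Let_def
proof (rule sonin_core)
  show "(x\<^sup>2 - 1) * poly (Rod n (Suc (Suc n))) x + 2 * x * poly (Rod n (Suc n)) x =
    real (n*(n+1)) * poly (Rod n n) x" using Rod_ODE_pt[OF assms] .
  show "(real n + 1 / 2)\<^sup>2 = real (n * (n + 1)) + 1 / 4" by (simp add: power2_eq_square algebra_simps)
qed

definition Sf :: "nat \<Rightarrow> real \<Rightarrow> real" where
  "Sf n x = Tf n x / sqrt (1 - x^2)"

lemma Sf_deriv:
  assumes n: "n \<ge> 1" and x: "-1 < x" "x < 1"
  shows "(Sf n has_real_derivative x * (poly (Rod n n) x)^2 / (2 * sqrt (1 - x^2)^3)) (at x)"
proof -
  have pos: "1 - x^2 > 0" using x by (simp add: abs_square_less_1 abs_less_iff)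
  have spos: "sqrt (1 - x^2) > 0" using pos by simp
  have ss: "sqrt (1 - x^2)^2 = 1 - x^2" using pos by simp
  have dg: "((\<lambda>x. 1 - x^2) has_real_derivative (- (2*x))) (at x)"
    by (auto intro!: derivative_eq_intros)
  have dsq: "(sqrt has_real_derivative inverse (sqrt (1 - x^2)) / 2) (at (1 - x^2))"
    by (rule DERIV_real_sqrt[OF pos])
  have ds0: "((\<lambda>x. sqrt (1 - x^2)) has_real_derivative (inverse (sqrt (1 - x^2)) / 2) * (- (2*x))) (at x)"
    by (rule DERIV_chain2[OF dsq dg])
  have e1: "(inverse (sqrt (1 - x^2)) / 2) * (- (2*x)) = - x / sqrt (1 - x^2)"
    using spos by (simp add: field_simps)
  have ds: "((\<lambda>x. sqrt (1 - x^2)) has_real_derivative (- x / sqrt (1 - x^2))) (at x)"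
    using ds0 unfolding e1 .
  have "(Sf n has_real_derivative (Tpf n x * sqrt (1 - x^2) - Tf n x * (- x / sqrt (1 - x^2))) / (sqrt (1 - x^2) * sqrt (1 - x^2))) (at x)"
    unfolding Sf_def[abs_def]
    by (rule DERIV_divide[OF Tf_deriv ds]) (use spos in simp)
  moreover have "(Tpf n x * sqrt (1 - x^2) - Tf n x * (- x / sqrt (1 - x^2))) / (sqrt (1 - x^2) * sqrt (1 - x^2))
      = ((1-x^2) * Tpf n x + x * Tf n x) / sqrt (1 - x^2)^3"
    using spos ss by (simp add: field_simps power2_eq_square power3_eq_cube)
  ultimately show ?thesis unfolding Tf_Tpf[OF n] by (simp add: field_simps)
qed

lemma Sf_ge:
  assumes n: "n \<ge> 1" and y: "-1 < y" "y < 1"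
  shows "Sf n 0 \<le> Sf n y"
proof (cases "y \<ge> 0")
  case True
  show ?thesis
  proof (rule deriv_nonneg_imp_mono[of 0 y "Sf n" "\<lambda>x. x * (poly (Rod n n) x)^2 / (2 * sqrt (1 - x^2)^3)"])
    fix x assume "x \<in> {0..y}"
    hence x: "-1 < x" "x < 1" "0 \<le> x" using y by auto
    show "(Sf n has_real_derivative x * (poly (Rod n n) x)^2 / (2 * sqrt (1 - x^2)^3)) (at x)"
      by (rule Sf_deriv[OF n x(1,2)])
    have "1 - x^2 > 0" using x by (simp add: abs_square_less_1 abs_less_iff)
    thus "0 \<le> x * (poly (Rod n n) x)^2 / (2 * sqrt (1 - x^2)^3)"
      using x by (intro divide_nonneg_nonneg mult_nonneg_nonneg) auto
  qed (use True in auto)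
next
  case False
  have "(\<lambda>x. - Sf n x) y \<le> (\<lambda>x. - Sf n x) 0"
  proof (rule deriv_nonneg_imp_mono[of y 0 "\<lambda>x. - Sf n x" "\<lambda>x. - (x * (poly (Rod n n) x)^2 / (2 * sqrt (1 - x^2)^3))"])
    fix x assume "x \<in> {y..0}"
    hence x: "-1 < x" "x < 1" "x \<le> 0" using y by auto
    show "((\<lambda>x. - Sf n x) has_real_derivative - (x * (poly (Rod n n) x)^2 / (2 * sqrt (1 - x^2)^3))) (at x)"
      by (rule DERIV_minus[OF Sf_deriv[OF n x(1,2)]])
    have "1 - x^2 > 0" using x by (simp add: abs_square_less_1 abs_less_iff)
    hence "0 \<le> (- x) * (poly (Rod n n) x)^2 / (2 * sqrt (1 - x^2)^3)"
      using x by (intro divide_nonneg_nonneg mult_nonneg_nonneg) auto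
    thus "0 \<le> - (x * (poly (Rod n n) x)^2 / (2 * sqrt (1 - x^2)^3))" by simp
  qed (use False in auto)
  thus ?thesis by simp
qed

lemma sonin:
  assumes n: "n \<ge> 1" and y: "y \<in> Ynodes n"
  shows "sqrt (1 - y^2)^3 * (poly (Rod n (Suc n)) y)^2 \<ge>
         (poly (Rod n (Suc n)) 0)^2 + ((real n + 1/2)^2 + 1/4) * (poly (Rod n n) 0)^2"
proof -
  have yin: "-1 < y" "y < 1" using Ynodes_props(3)[OF n] y by auto
  have pos: "1 - y^2 > 0" using yin by (simp add: abs_square_less_1 abs_less_iff)
  define s where "s = sqrt (1 - y^2)"
  have spos: "s > 0" using pos by (simp add: s_def)
  have ss: "s^2 = 1 - y^2" using pos by (simp add: s_def)
  have R0: "poly (Rod n n) y = 0" using y by (simp add: Ynodes_def)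
  have "Sf n y = (1 - y^2)^2 * (poly (Rod n (Suc n)) y)^2 / s"
    by (simp add: Sf_def Tf_def Let_def R0 s_def)
  also have "\<dots> = s^3 * (poly (Rod n (Suc n)) y)^2"
    unfolding ss[symmetric] using spos by (simp add: field_simps power2_eq_square power3_eq_cube)
  finally have Sy: "Sf n y = s^3 * (poly (Rod n (Suc n)) y)^2" .
  have S0: "Sf n 0 = (poly (Rod n (Suc n)) 0)^2 + ((real n + 1/2)^2 + 1/4) * (poly (Rod n n) 0)^2"
    by (simp add: Sf_def Tf_def Let_def algebra_simps)
  show ?thesis using Sf_ge[OF n yin] Sy S0 by (simp add: s_def)
qed


lemma coeff_pcomp_sq:
  "coeff (pcompose p [:0,0,1::real:]) k = (if even k then coeff p (k div 2) else 0)"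
proof (induction p arbitrary: k rule: pCons_induct)
  case 0 thus ?case by simp
next
  case (pCons a p)
  have e: "pcompose (pCons a p) [:0,0,1::real:] = [:a:] + pCons 0 (pCons 0 (pcompose p [:0,0,1:]))"
    by (simp add: pcompose_pCons)
  show ?case
  proof (cases k)
    case 0 thus ?thesis by (simp add: e)
  next
    case (Suc k1)
    show ?thesis
    proof (cases k1)
      case 0 thus ?thesis using Suc by (simp add: e)
    next
      case (Suc j)
      have "coeff (pcompose (pCons a p) [:0,0,1::real:]) k = coeff (pcompose p [:0,0,1:]) j"
        using \<open>k = Suc k1\<close> Suc by (simp add: e coeff_pCons)
      also have "\<dots> = (if even j then coeff p (j div 2) else 0)" by (rule pCons.IH)
      also have "\<dots> = (if even k then coeff (pCons a p) (k div 2) else 0)"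
        using \<open>k = Suc k1\<close> Suc by simp
      finally show ?thesis .
    qed
  qed
qed

lemma pcompose_pow: "pcompose (p ^ n) q = (pcompose p q) ^ n"
  by (induction n) (simp_all add: pcompose_1 pcompose_mult)

lemma Qpow_eq: "[:-1,0,1::real:] ^ n = pcompose ([:-1,1:] ^ n) [:0,0,1:]"
  by (simp add: pcompose_pow pcompose_pCons)

lemma coeff_Qpow:
  "coeff ([:-1,0,1::real:] ^ n) k =
     (if even k \<and> k div 2 \<le> n then (-1)^(n - k div 2) * real (n choose (k div 2)) else 0)"
proof -
  have "coeff ([:-1,0,1::real:] ^ n) k = (if even k then coeff ([:-1,1::real:] ^ n) (k div 2) else 0)"
    unfolding Qpow_eq coeff_pcomp_sq ..
  also have "\<dots> = (if even k \<and> k div 2 \<le> n then (-1)^(n - k div 2) * real (n choose (k div 2)) else 0)"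
  proof (cases "even k \<and> k div 2 \<le> n")
    case True thus ?thesis by (simp add: coeff_linear_poly_power)
  next
    case False
    moreover have "k div 2 > n \<Longrightarrow> coeff ([:-1,1::real:] ^ n) (k div 2) = 0"
      by (rule coeff_eq_0) (simp add: degree_linear_power)
    ultimately show ?thesis by auto
  qed
  finally show ?thesis .
qed

lemma Rod_at_0: "poly (Rod n k) 0 = fact k * coeff ([:-1,0,1::real:] ^ n) k"
  by (simp add: Rod_def poly_0_coeff_0 coeff_higher_pderiv pochhammer_fact)

lemma Rod_even_0:
  assumes "n = 2*m"
  shows "poly (Rod n n) 0 = fact n * (-1)^m * real ((2*m) choose m)"
        "poly (Rod n (Suc n)) 0 = 0"
  using assms by (simp_all add: Rod_at_0 coeff_Qpow)

lemma Rod_odd_0: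
  assumes "n = 2*m+1"
  shows "poly (Rod n n) 0 = 0"
        "poly (Rod n (Suc n)) 0 = fact (Suc n) * (-1)^m * real ((2*m+1) choose (m+1))"
proof -
  show "poly (Rod n n) 0 = 0" unfolding Rod_at_0 coeff_Qpow using assms by auto
  have "Suc n div 2 = m + 1" "even (Suc n)" "n - Suc n div 2 = m" using assms by auto
  thus "poly (Rod n (Suc n)) 0 = fact (Suc n) * (-1)^m * real ((2*m+1) choose (m+1))"
    unfolding Rod_at_0 coeff_Qpow using assms by auto
qed


definition W :: "nat \<Rightarrow> real" where
  "W m = (\<Prod>k=1..m. (4*real k^2) / (4*real k^2 - 1))"

definition cc :: "nat \<Rightarrow> real" where
  "cc m = fact (2*m) / (fact m ^ 2 * 4^m)"

lemma cancel_aux: "a > 0 \<Longrightarrow> Y > 0 \<Longrightarrow> 2*a*X/(a^2*Y*4) = X/(2*a*(Y::real))"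
  by (simp add: field_simps power2_eq_square)

lemma cc_Suc: "cc (Suc m) = cc m * (2*real m+1) / (2*real m+2)"
proof -
  define F where "F = (fact (2*m) :: real)"
  define M where "M = (fact m :: real)"
  have f: "fact (2 * Suc m) = 2*(real m+1) * ((2*real m+1) * F)"
    by (simp add: F_def algebra_simps)
  have g: "(fact (Suc m) :: real) = (real m + 1) * M" by (simp add: M_def algebra_simps)
  have "cc (Suc m) = 2*(real m+1) * ((2*real m+1) * F) / ((real m + 1)^2 * (M^2 * 4^m) * 4)"
    unfolding cc_def f g power_mult_distrib power_Suc by (simp add: mult_ac)
  also have "\<dots> = ((2*real m+1) * F) / (2*(real m+1)*(M^2 * 4^m))"
    by (rule cancel_aux) (auto simp: M_def)
  also have "\<dots> = cc m * (2*real m+1) / (2*real m+2)"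
    by (simp add: cc_def F_def M_def field_simps)
  finally show ?thesis .
qed

lemma cc_pos: "cc m > 0" by (simp add: cc_def)

lemma W_cc: "W m = 1 / ((2*real m+1) * cc m ^ 2)"
proof (induction m)
  case 0 thus ?case by (simp add: W_def cc_def)
next
  case (Suc m)
  have "W (Suc m) = W m * ((4*real (Suc m)^2) / (4*real (Suc m)^2 - 1))"
    by (simp add: W_def)
  also have "\<dots> = 1 / ((2*real (Suc m)+1) * cc (Suc m) ^ 2)"
    unfolding Suc.IH cc_Suc using cc_pos[of m] by (simp add: field_simps power2_eq_square)
  finally show ?case .
qed

lemma W_nonneg: "W m \<ge> 0"
  using cc_pos[of m] by (simp add: W_cc)

lemma W_lim: "W \<longlonglongrightarrow> pi / 2"
  using wallis unfolding W_def[abs_def] .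

definition fu :: "nat \<Rightarrow> real" where
  "fu m = (4*real m+1)*(2*real m+1)/(8*real m^2+4*real m+1)"

definition fv :: "nat \<Rightarrow> real" where
  "fv m = (4*real m+3)/(4*real m+2)"

lemma fu_step: "fu m \<le> (4*real (Suc m)^2) / (4*real (Suc m)^2 - 1) * fu (Suc m)"
proof -
  define x where "x = real m"
  have x: "x \<ge> 0" by (simp add: x_def)
  have x2: "x^2 \<ge> 0" by simp
  have x1: "(x+1)^2 = x^2 + 2*x + 1" by (simp add: power2_eq_square algebra_simps)
  have d1: "8*x^2+4*x+1 > 0" using x x2 by linarith
  have d2: "(4*(x+1)^2 - 1) * (8*(x+1)^2+4*(x+1)+1) > 0"
  proof (intro mult_pos_pos)
    have e1: "4*(x+1)^2 - 1 = 4*x^2 + 8*x + 3" by (simp add: power2_eq_square algebra_simps)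
    have e2: "8*(x+1)^2+4*(x+1)+1 = 8*x^2 + 20*x + 13" by (simp add: power2_eq_square algebra_simps)
    show "4*(x+1)^2 - 1 > 0" unfolding e1 using x x2 by linarith
    show "8*(x+1)^2+4*(x+1)+1 > 0" unfolding e2 using x x2 by linarith
  qed
  have key: "(4*x+1)*(2*x+1) * ((4*(x+1)^2 - 1) * (8*(x+1)^2+4*(x+1)+1))
      \<le> 4*(x+1)^2 * ((4*(x+1)+1)*(2*(x+1)+1)) * (8*x^2+4*x+1)"
  proof -
    have "4*(x+1)^2 * ((4*(x+1)+1)*(2*(x+1)+1)) * (8*x^2+4*x+1)
          - (4*x+1)*(2*x+1) * ((4*(x+1)^2 - 1) * (8*(x+1)^2+4*(x+1)+1))
          = (2*x+3)*(8*x^2+12*x+7)"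
      by (simp add: algebra_simps power2_eq_square)
    moreover have "(2*x+3)*(8*x^2+12*x+7) \<ge> 0" using x by (intro mult_nonneg_nonneg) auto
    ultimately show ?thesis by linarith
  qed
  define P where "P = (4*x+1)*(2*x+1)"
  define B where "B = 8*x^2+4*x+1"
  define C where "C = 4*(x+1)^2 * ((4*(x+1)+1)*(2*(x+1)+1))"
  define D where "D = (4*(x+1)^2 - 1) * (8*(x+1)^2+4*(x+1)+1)"
  have "fu m = P / B" by (simp add: fu_def P_def B_def x_def)
  moreover have "(4*real (Suc m)^2) / (4*real (Suc m)^2 - 1) * fu (Suc m) = C / D"
    by (simp add: fu_def C_def D_def x_def algebra_simps)
  moreover have "P / B \<le> C / D"
  proof -
    have "P * D \<le> C * B" using key by (simp add: P_def B_def C_def D_def)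
    moreover have "B > 0" "D > 0" using d1 d2 by (simp_all add: B_def D_def)
    ultimately show ?thesis by (simp add: field_simps)
  qed
  ultimately show ?thesis by simp
qed

lemma fv_step: "fv m \<le> (4*real (Suc m)^2) / (4*real (Suc m)^2 - 1) * fv (Suc m)"
proof -
  define x where "x = real m"
  have x: "x \<ge> 0" by (simp add: x_def)
  have x2: "x^2 \<ge> 0" by simp
  define P where "P = 4*x+3"
  define B where "B = 4*x+2"
  define C where "C = 4*(x+1)^2 * (4*(x+1)+3)"
  define D where "D = (4*(x+1)^2 - 1) * (4*(x+1)+2)"
  have e1: "4*(x+1)^2 - 1 = 4*x^2 + 8*x + 3" by (simp add: power2_eq_square algebra_simps)
  have "fv m = P / B" by (simp add: fv_def P_def B_def x_def)
  moreover have "(4*real (Suc m)^2) / (4*real (Suc m)^2 - 1) * fv (Suc m) = C / D"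
    by (simp add: fv_def C_def D_def x_def algebra_simps)
  moreover have "P / B \<le> C / D"
  proof -
    have "C * B - P * D = 4*x+2" by (simp add: P_def B_def C_def D_def algebra_simps power2_eq_square)
    hence "P * D \<le> C * B" using x by linarith
    moreover have "B > 0" using x by (simp add: B_def)
    moreover have "D > 0"
    proof -
      have "4*x^2 + 8*x + 3 > 0" using x x2 by linarith
      moreover have "4*(x+1)+2 = 4*x + 6" by simp
      hence "4*(x+1)+2 > 0" using x by linarith
      ultimately show ?thesis unfolding D_def e1 by (rule mult_pos_pos)
    qed
    ultimately show ?thesis by (simp add: field_simps)
  qed
  ultimately show ?thesis by simp
qed

lemma W_Suc: "W (Suc m) = W m * ((4*real (Suc m)^2) / (4*real (Suc m)^2 - 1))"
  by (simp add: W_def)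

lemma incseq_Wf:
  assumes "\<And>m. f m \<le> (4*real (Suc m)^2) / (4*real (Suc m)^2 - 1) * f (Suc m)"
  shows "incseq (\<lambda>m. W m * f m)"
proof (rule incseq_SucI)
  fix m
  have "W m * f m \<le> W m * ((4*real (Suc m)^2) / (4*real (Suc m)^2 - 1) * f (Suc m))"
    by (rule mult_left_mono[OF assms W_nonneg])
  thus "W m * f m \<le> W (Suc m) * f (Suc m)" by (simp add: W_Suc mult_ac)
qed

lemma fu_lim: "fu \<longlonglongrightarrow> 1"
  unfolding fu_def[abs_def] by real_asymp

lemma fv_lim: "fv \<longlonglongrightarrow> 1"
  unfolding fv_def[abs_def] by real_asymp

lemma Wfu_le: "W m * fu m \<le> pi / 2"
proof -
  have "(\<lambda>m. W m * fu m) \<longlonglongrightarrow> pi / 2 * 1" by (intro tendsto_mult W_lim fu_lim)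
  from incseq_le[OF incseq_Wf[OF fu_step] this] show ?thesis by simp
qed

lemma Wfv_le: "W m * fv m \<le> pi / 2"
proof -
  have "(\<lambda>m. W m * fv m) \<longlonglongrightarrow> pi / 2 * 1" by (intro tendsto_mult W_lim fv_lim)
  from incseq_le[OF incseq_Wf[OF fv_step] this] show ?thesis by simp
qed

lemma cancel2: "a > 0 \<Longrightarrow> 1 / (a * c) * (b * a / p) = b / (c * (p::real))"
  by (simp add: field_simps)

lemma wallis_even: "4*real m + 1 \<le> pi * cc m ^ 2 * ((2*real m + 1/2)^2 + 1/4)"
proof -
  have c: "cc m > 0" by (rule cc_pos)
  have "real m^2 \<ge> 0" by simp
  hence pos: "8*real m^2 + 4*real m + 1 > 0" by linarith
  have "W m * fu m = (4*real m+1) / (cc m ^ 2 * (8*real m^2+4*real m+1))"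
    unfolding W_cc fu_def by (rule cancel2) simp
  hence "(4*real m+1) / (cc m ^ 2 * (8*real m^2+4*real m+1)) \<le> pi / 2" using Wfu_le[of m] by simp
  hence "4*real m+1 \<le> pi / 2 * (cc m ^ 2 * (8*real m^2+4*real m+1))"
    using c pos by (simp add: divide_le_eq)
  thus ?thesis by (simp add: power2_eq_square algebra_simps)
qed

lemma wallis_odd: "4*real m + 3 \<le> pi * cc m ^ 2 * (2*real m + 1)^2"
proof -
  have c: "cc m > 0" by (rule cc_pos)
  have "W m * fv m = (4*real m+3) / (cc m ^ 2 * (2*real m+1) * (4*real m+2))"
    unfolding W_cc fv_def using cancel2[of "2*real m+1" "cc m ^ 2" "4*real m+3" "2*(4*real m+2)"]
    by (simp add: field_simps)
  hence "(4*real m+3) / (cc m ^ 2 * (2*real m+1) * (4*real m+2)) \<le> pi / 2" using Wfv_le[of m] by simp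
  hence "4*real m+3 \<le> pi / 2 * (cc m ^ 2 * (2*real m+1) * (4*real m+2))"
    using c by (simp add: divide_le_eq)
  thus ?thesis by (simp add: power2_eq_square algebra_simps)
qed


lemma binom_even: "real ((2*m) choose m) = cc m * 4^m"
  by (simp add: binomial_fact cc_def mult_2 power2_eq_square)

lemma pow16: "(4::real)^m * 4^m = 16^m"
  by (simp flip: power_mult_distrib)

lemma pow2n: "(2::real)^(2*m) = 4^m"
  by (simp add: power_mult)

lemma canc3: "a > 0 \<Longrightarrow> M > 0 \<Longrightarrow> (2*a) * b * F * (b * F / (a * M * M)) = 2 * (b*F) * b * (F / M^2 :: real)"
  by (simp add: field_simps power2_eq_square)

lemma neg1sq: "((-1::real)^m)^2 = 1"
  by (simp flip: power_mult)

lemma pow16': "((4::real)^m)^2 = 16^m"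
  by (simp add: power2_eq_square pow16)

lemma canc_gen: "a \<noteq> 0 \<Longrightarrow> M \<noteq> 0 \<Longrightarrow>
  2*a*b*F * (b*F/(a*M*M)) = 2*(b*F)*b*(F/M^2 :: real)"
  by (simp add: field_simps power2_eq_square)

lemma canc4: "x \<ge> 0 \<Longrightarrow> M > 0 \<Longrightarrow>
  2*(x+1)*(2*x+1)*F * ((2*x+1)*F/((x+1)*M*M)) = 2*((2*x+1)*F)*(2*x+1)*(F/M^2 :: real)"
  by (rule canc_gen) auto

lemma binom_odd: "fact (Suc (2*m+1)) * real ((2*m+1) choose (m+1)) = 2 * fact (2*m+1) * (2*real m+1) * (cc m * 4^m)"
proof -
  define x where "x = real m"
  define F where "F = (fact (2*m) :: real)"
  define M where "M = (fact m :: real)"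
  define B where "B = real ((2*m+1) choose (m+1))"
  have le: "m + 1 \<le> 2*m+1" by simp
  have e: "2*m+1 - (m+1) = m" by simp
  have hB0: "B = fact (2*m+1) / (fact (m+1) * fact (2*m+1 - (m+1)))"
    unfolding B_def by (rule binomial_fact[OF le])
  have h2: "(fact (2*m+1) :: real) = (2*x+1) * F" by (simp add: x_def F_def algebra_simps)
  have h4: "(fact (m+1) :: real) = (x+1) * M" by (simp add: x_def M_def algebra_simps)
  have hB: "B = (2*x+1)*F/((x+1)*M*M)" unfolding hB0 e h2 h4 by (simp add: M_def mult.assoc)
  have h1: "(fact (Suc (2*m+1)) :: real) = 2*(x+1)*(2*x+1)*F" by (simp add: x_def F_def algebra_simps)
  have h3: "cc m * 4^m = F / M^2" by (simp add: cc_def F_def M_def)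
  have "fact (Suc (2*m+1)) * B = 2 * fact (2*m+1) * (2*x+1) * (cc m * 4^m)"
    unfolding h1 h2 h3 hB by (rule canc4) (simp_all add: x_def M_def)
  thus ?thesis by (simp add: B_def x_def)
qed

lemma pow_4_16: "(4::real)^(m*2) = 16^m"
  by (simp add: power_mult pow16')

lemma pow_2_4: "(2::real)^(n*2) = 4^n"
  using pow2n[of n] by (simp add: mult.commute)

lemma A_bound:
  assumes n: "n \<ge> 1"
  shows "(2*real n+1) * (fact n * 2^n)^2 / pi \<le>
         (poly (Rod n (Suc n)) 0)^2 + ((real n + 1/2)^2 + 1/4) * (poly (Rod n n) 0)^2"
proof (cases "even n")
  case True
  then obtain m where m: "n = 2*m" by (auto elim: evenE)
  define K where "K = (fact n)^2 * 16^m / pi"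
  have Kpos: "K > 0" by (simp add: K_def)
  have "(2*real n+1) * (fact n * 2^n)^2 / pi = (4*real m+1) * K"
  proof -
    have "(2::real)^n = 4^m" by (simp add: m pow2n)
    hence "(fact n * 2^n)^2 = (fact n)^2 * (16::real)^m"
      by (simp add: power_mult_distrib power2_eq_square pow16 flip: mult.assoc)
    thus ?thesis by (simp add: K_def m)
  qed
  also have "\<dots> \<le> (pi * cc m ^ 2 * ((2*real m + 1/2)^2 + 1/4)) * K"
    by (rule mult_right_mono[OF wallis_even]) (use Kpos in simp)
  also have "\<dots> = ((real n + 1/2)^2 + 1/4) * (poly (Rod n n) 0)^2"
    unfolding Rod_even_0(1)[OF m] binom_even using m
    by (simp add: K_def power_mult_distrib neg1sq pow16' field_simps)
  also have "\<dots> \<le> (poly (Rod n (Suc n)) 0)^2 + ((real n + 1/2)^2 + 1/4) * (poly (Rod n n) 0)^2"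
    by simp
  finally show ?thesis .
next
  case False
  then obtain m where m: "n = 2*m+1" by (auto elim: oddE)
  define K where "K = (fact n)^2 * 4^n / pi"
  have Kpos: "K > 0" by (simp add: K_def)
  have "(2*real n+1) * (fact n * 2^n)^2 / pi = (4*real m+3) * K"
  proof -
    have "(fact n * (2::real)^n)^2 = (fact n)^2 * 4^n"
      by (simp add: power_mult_distrib pow_2_4 flip: power_mult)
    thus ?thesis by (simp add: K_def m)
  qed
  also have "\<dots> \<le> (pi * cc m ^ 2 * (2*real m + 1)^2) * K"
    by (rule mult_right_mono[OF wallis_odd]) (use Kpos in simp)
  also have "\<dots> = (poly (Rod n (Suc n)) 0)^2"
  proof -
    have "poly (Rod n (Suc n)) 0 = (-1)^m * (2 * fact n * (2*real m+1) * (cc m * 4^m))"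
      unfolding Rod_odd_0(2)[OF m] using binom_odd[of m] m by simp
    hence "(poly (Rod n (Suc n)) 0)^2 = 4 * (fact n)^2 * (2*real m+1)^2 * cc m ^ 2 * 16^m"
      by (simp add: power_mult_distrib neg1sq pow16')
    moreover have "(4::real)^n = 4 * 16^m" by (simp add: m power_mult)
    ultimately show ?thesis by (simp add: K_def)
  qed
  also have "\<dots> \<le> (poly (Rod n (Suc n)) 0)^2 + ((real n + 1/2)^2 + 1/4) * (poly (Rod n n) 0)^2"
    by simp
  finally show ?thesis .
qed


lemma gb_cc: "((-1/2::real) gchoose k) * (-1)^k = cc k"
proof (induction k)
  case 0 thus ?case by (simp add: cc_def)
next
  case (Suc k)
  have "((-1/2::real) gchoose Suc k) * (-1)^Suc k = (((-1/2::real) gchoose k) * (-1)^k) * ((1/2 + real k) / (real k + 1))"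
    by (simp add: gbinomial_Suc_rec algebra_simps)
  also have "\<dots> = cc (Suc k)" unfolding Suc.IH cc_Suc by (simp add: field_simps)
  finally show ?case .
qed

lemma cc_le1: "cc k \<le> 1"
proof (induction k)
  case 0 thus ?case by (simp add: cc_def)
next
  case (Suc k)
  have "cc (Suc k) = cc k * ((2*real k+1) / (2*real k+2))" by (simp add: cc_Suc)
  also have "\<dots> \<le> cc k * 1"
    by (rule mult_left_mono) (use cc_pos[of k] in auto)
  finally show ?case using Suc.IH by simp
qed

lemma inv_sqrt_series:
  assumes "\<bar>x\<bar> < (1::real)"
  shows "(\<lambda>k. cc k * x^(2*k)) sums (1 / sqrt (1 - x^2))"
proof -
  have sq: "x^2 < 1" using assms by (simp add: abs_square_less_1)
  have x2: "abs (- (x^2)) < 1" using sq by simp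
  have pos: "1 - x^2 > 0" using sq by simp
  have s1: "(\<lambda>k. ((-1/2::real) gchoose k) * (- (x^2))^k) sums (1 + - (x^2)) powr (-1/2)"
    by (rule gen_binomial_real[OF x2])
  have t: "((-1/2::real) gchoose k) * (- (x^2))^k = cc k * x^(2*k)" for k
  proof -
    have "(- (x^2))^k = (-1)^k * x^(2*k)"
      unfolding power_minus[of "x^2" k] power_mult[of x 2 k] ..
    thus ?thesis using gb_cc[of k] by (simp add: mult_ac)
  qed
  have "(1 + - (x^2)) powr (-1/2) = 1 / (1 - x^2) powr (1/2)"
    using powr_minus_divide[of "1 - x^2" "1/2"] by simp
  also have "(1 - x^2) powr (1/2) = sqrt (1 - x^2)"
    using pos by (simp add: powr_half_sqrt)
  finally have e: "(1 + - (x^2)) powr (-1/2) = 1 / sqrt (1 - x^2)" .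
  show ?thesis using s1 unfolding t e .
qed

definition fa :: "nat \<Rightarrow> real" where
  "fa n = (if even n then cc (n div 2) / real (Suc n) else 0)"

lemma fa_nonneg: "fa n \<ge> 0"
  using cc_pos[of "n div 2"] by (simp add: fa_def)

lemma fa_le1: "fa n \<le> 1"
proof -
  have "cc (n div 2) / real (Suc n) \<le> cc (n div 2)"
    using cc_pos[of "n div 2"] by (simp add: divide_le_eq)
  thus ?thesis using cc_le1[of "n div 2"] by (simp add: fa_def)
qed

lemma fa_deriv_sums:
  assumes "\<bar>x\<bar> < (1::real)"
  shows "(\<lambda>n. fa n * real (Suc n) * x^n) sums (1 / sqrt (1 - x^2))"
proof -
  define h where "h n = fa n * real (Suc n) * x^n" for n
  have sm: "strict_mono (\<lambda>k::nat. 2*k)" by (rule strict_monoI) simp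
  have z: "h n = 0" if "n \<notin> range (\<lambda>k::nat. 2*k)" for n
  proof -
    have "odd n" using that by (auto elim!: evenE)
    thus ?thesis by (simp add: h_def fa_def)
  qed
  have "(\<lambda>k. h (2*k)) = (\<lambda>k. cc k * x^(2*k))"
    by (rule ext) (simp add: h_def fa_def)
  hence "(\<lambda>k. h (2*k)) sums (1 / sqrt (1 - x^2))" using inv_sqrt_series[OF assms] by simp
  moreover have "((\<lambda>k. h (2*k)) sums c) = (h sums c)" for c
    by (rule sums_mono_reindex[OF sm]) (use z in auto)
  ultimately have "h sums (1 / sqrt (1 - x^2))" by simp
  thus ?thesis by (simp add: h_def[abs_def])
qed

lemma fa_summable:
  assumes "\<bar>x\<bar> < (1::real)"
  shows "summable (\<lambda>n. fa n * x^Suc n)"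
proof (rule summable_comparison_test')
  show "summable (\<lambda>n. \<bar>x\<bar> * \<bar>x\<bar>^n)"
    by (rule summable_mult) (rule summable_geometric, use assms in simp)
  fix n :: nat
  have "norm (fa n * x^Suc n) = fa n * \<bar>x\<bar>^Suc n" using fa_nonneg[of n] by (simp add: abs_mult power_abs)
  also have "\<dots> \<le> 1 * \<bar>x\<bar>^Suc n" by (rule mult_right_mono[OF fa_le1]) simp
  finally show "norm (fa n * x^Suc n) \<le> \<bar>x\<bar> * \<bar>x\<bar>^n" by simp
qed

lemma arcsin_series:
  assumes "-1 < x" "x < (1::real)"
  shows "(\<lambda>n. fa n * x^Suc n) sums arcsin x"
proof -
  define F where "F y = (\<Sum>n. fa n * y^Suc n)" for y :: real
  have dF: "(F has_real_derivative 1 / sqrt (1 - y^2)) (at y)" if "-1 < y" "y < 1" for y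
  proof -
    have "(F has_real_derivative (\<Sum>n. fa n * real (Suc n) * y^n)) (at y)"
      unfolding F_def[abs_def]
    proof (rule DERIV_power_series')
      fix z :: real assume "z \<in> {-1<..<1}"
      hence "\<bar>z\<bar> < 1" by auto
      thus "summable (\<lambda>n. fa n * real (Suc n) * z^n)" using fa_deriv_sums sums_summable by blast
    qed (use that in auto)
    moreover have "(\<Sum>n. fa n * real (Suc n) * y^n) = 1 / sqrt (1 - y^2)"
      using fa_deriv_sums[of y] that by (simp add: sums_iff)
    ultimately show ?thesis by simp
  qed
  have dG: "((\<lambda>y. F y - arcsin y) has_real_derivative 0) (at y)" if "y \<in> {-1<..<1}" for y
  proof -
    have "((\<lambda>y. F y - arcsin y) has_real_derivative (1 / sqrt (1 - y^2) - inverse (sqrt (1 - y^2)))) (at y)"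
      using that by (intro DERIV_diff dF DERIV_arcsin) auto
    thus ?thesis by (simp add: divide_inverse)
  qed
  have "F x - arcsin x = F 0 - arcsin 0"
    by (rule DERIV_isconst3[of "-1" 1 x 0 "\<lambda>y. F y - arcsin y"]) (use assms dG in auto)
  moreover have "F 0 = 0" by (simp add: F_def)
  ultimately have "F x = arcsin x" by simp
  moreover have "summable (\<lambda>n. fa n * x^Suc n)" by (rule fa_summable) (use assms in auto)
  hence "(\<lambda>n. fa n * x^Suc n) sums F x" unfolding F_def by (rule summable_sums)
  ultimately show ?thesis by simp
qed

lemma partial_even: "(\<Sum>n<2*N. fa n) = (\<Sum>k<N. cc k / (2*real k + 1))"
proof (induction N)
  case 0 thus ?case by simp
next
  case (Suc N)
  have "(\<Sum>n<2*Suc N. fa n) = (\<Sum>n<2*N. fa n) + fa (2*N) + fa (Suc (2*N))"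
    by (simp add: numeral_2_eq_2)
  also have "fa (2*N) = cc N / (2*real N + 1)" by (simp add: fa_def)
  also have "fa (Suc (2*N)) = 0" by (simp add: fa_def)
  finally show ?case using Suc.IH by simp
qed

lemma S_lower:
  assumes "e > 0"
  shows "\<exists>N. pi - e < (\<Sum>k<N. 2 * cc k / (2*real k + 1))"
proof -
  define d where "d = min e 1 / 4"
  have d: "d > 0" "d < e / 2" "d < pi / 2" using assms pi_gt3 by (auto simp: d_def min_def)
  define t where "t = pi / 2 - d"
  have t: "0 < t" "t < pi / 2" using d by (auto simp: t_def)
  define x where "x = sin t"
  have x0: "0 < x" using t by (simp add: x_def sin_gt_zero)
  have x1: "x < 1"
  proof -
    have "sin t < sin (pi/2)" using t by (intro sin_monotone_2pi) auto
    thus ?thesis by (simp add: x_def)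
  qed
  have as: "arcsin x = t" unfolding x_def by (rule arcsin_sin) (use t in auto)
  have "(\<lambda>n. fa n * x^Suc n) sums t" using arcsin_series[of x] x0 x1 as by simp
  hence lim: "(\<lambda>M. \<Sum>n<M. fa n * x^Suc n) \<longlonglongrightarrow> t" by (simp add: sums_def)
  have "pi / 2 - e / 2 < t" using d by (simp add: t_def)
  from order_tendstoD(1)[OF lim this] obtain M where M: "pi / 2 - e / 2 < (\<Sum>n<M. fa n * x^Suc n)"
    by (auto simp: eventually_sequentially)
  also have "\<dots> \<le> (\<Sum>n<M. fa n)"
  proof (rule sum_mono)
    fix n assume "n \<in> {..<M}"
    have "x^Suc n \<le> 1" using x0 x1 by (intro power_le_one) auto
    thus "fa n * x^Suc n \<le> fa n" using fa_nonneg[of n] by (simp add: mult_left_le)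
  qed
  also have "\<dots> \<le> (\<Sum>n<2*M. fa n)"
    by (rule sum_mono2) (auto simp: fa_nonneg)
  also have "\<dots> = (\<Sum>k<M. cc k / (2*real k + 1))" by (rule partial_even)
  finally have "pi - e < 2 * (\<Sum>k<M. cc k / (2*real k + 1))" by simp
  also have "\<dots> = (\<Sum>k<M. 2 * cc k / (2*real k + 1))" by (simp add: sum_distrib_left)
  finally show ?thesis by blast
qed


lemma R1_pos: "poly (Rod n n) 1 > 0"
  by (simp add: Rod_at_1)

lemma lam_pos:
  assumes n: "n \<ge> 1" and y: "y \<in> Ynodes n"
  shows "lam n y > 0"
proof -
  have yin: "-1 < y" "y < 1" using Ynodes_props(3)[OF n] y by auto
  have "1 - y^2 > 0" using yin by (simp add: abs_square_less_1 abs_less_iff)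
  moreover have "poly (Rod n (Suc n)) y \<noteq> 0" by (rule Ynodes_props(4)[OF n y])
  ultimately show ?thesis unfolding christoffel[OF n y] using R1_pos[of n]
    by (intro divide_pos_pos mult_pos_pos) auto
qed

definition G :: "nat \<Rightarrow> real" where
  "G n = (\<Sum>y\<in>Ynodes n. lam n y / sqrt (1 - y^2))"

definition pN :: "nat \<Rightarrow> real poly" where
  "pN N = (\<Sum>k<N. monom (cc k) (2*k))"

lemma Jf_monom: "Jf (monom c m) = c * (1 - (-1)^(Suc m)) / real (Suc m)"
proof -
  have "monom c m = pderiv (monom (c / real (Suc m)) (Suc m))"
    by (simp add: pderiv_monom)
  hence "Jf (monom c m) = poly (monom (c / real (Suc m)) (Suc m)) 1 - poly (monom (c / real (Suc m)) (Suc m)) (-1)"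
    by (simp add: Jf_pderiv)
  also have "\<dots> = c / real (Suc m) * (1 - (-1)^Suc m)"
    by (simp only: poly_monom) (simp add: algebra_simps del: power_Suc)
  finally show ?thesis by simp
qed

lemma Jf_pN: "Jf (pN N) = (\<Sum>k<N. 2 * cc k / (2*real k + 1))"
  unfolding pN_def Jf_sum Jf_monom by (intro sum.cong refl) (simp add: field_simps)

lemma poly_pN: "poly (pN N) y = (\<Sum>k<N. cc k * y^(2*k))"
  by (simp add: pN_def poly_sum poly_monom)

lemma degree_pN: "N \<le> n \<Longrightarrow> degree (pN N) < 2*n \<or> N = 0"
proof -
  assume "N \<le> n"
  show ?thesis
  proof (cases "N = 0")
    case False
    have "degree (pN N) \<le> 2*(N-1)"
      unfolding pN_def by (rule degree_sum_le) (auto intro: order.trans[OF degree_monom_le])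
    thus ?thesis using False \<open>N \<le> n\<close> by simp
  qed simp
qed

lemma pN_le:
  assumes "\<bar>y\<bar> < (1::real)"
  shows "poly (pN N) y \<le> 1 / sqrt (1 - y^2)"
proof -
  have s: "(\<lambda>k. cc k * y^(2*k)) sums (1 / sqrt (1 - y^2))" by (rule inv_sqrt_series[OF assms])
  have "(\<Sum>k<N. cc k * y^(2*k)) \<le> (\<Sum>k. cc k * y^(2*k))"
    by (rule sum_le_suminf) (use s less_imp_le[OF cc_pos] in \<open>auto simp: sums_iff power_mult intro!: mult_nonneg_nonneg\<close>)
  thus ?thesis using s by (simp add: poly_pN sums_iff)
qed

lemma G_lower:
  assumes n: "n \<ge> 1" and N: "N \<le> n"
  shows "(\<Sum>k<N. 2 * cc k / (2*real k + 1)) \<le> G n"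
proof (cases "N = 0")
  case True
  have "G n \<ge> 0" unfolding G_def
  proof (intro sum_nonneg divide_nonneg_nonneg)
    fix y assume y: "y \<in> Ynodes n"
    show "0 \<le> lam n y" using lam_pos[OF n y] by simp
    have "y \<in> {-1<..<1}" using Ynodes_props(3)[OF n] y by blast
    hence "\<bar>y\<bar> < 1" by (simp add: abs_less_iff)
    hence "y^2 < 1" by (simp add: abs_square_less_1)
    thus "0 \<le> sqrt (1 - y^2)" by simp
  qed
  thus ?thesis using True by simp
next
  case False
  have dg: "degree (pN N) < 2*n" using degree_pN[OF N] False by simp
  have "(\<Sum>k<N. 2 * cc k / (2*real k + 1)) = (\<Sum>y\<in>Ynodes n. lam n y * poly (pN N) y)"
    using exactness[OF n dg] Jf_pN by simp
  also have "\<dots> \<le> G n" unfolding G_def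
  proof (rule sum_mono)
    fix y assume y: "y \<in> Ynodes n"
    have "y \<in> {-1<..<1}" using Ynodes_props(3)[OF n] y by blast
    hence "\<bar>y\<bar> < 1" by (simp add: abs_less_iff)
    hence "poly (pN N) y \<le> 1 / sqrt (1 - y^2)" by (rule pN_le)
    hence "lam n y * poly (pN N) y \<le> lam n y * (1 / sqrt (1 - y^2))"
      using lam_pos[OF n y] by (intro mult_left_mono) auto
    thus "lam n y * poly (pN N) y \<le> lam n y / sqrt (1 - y^2)" by simp
  qed
  finally show ?thesis .
qed

lemma canc5: "P \<noteq> 0 \<Longrightarrow> d > 0 \<Longrightarrow> 2*P^2/(d*P^2/pi) = 2*pi/(d::real)"
  by (simp add: field_simps)

lemma node_bound:
  assumes n: "n \<ge> 1" and y: "y \<in> Ynodes n"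
  shows "lam n y / sqrt (1 - y^2) \<le> 2 * pi / (2*real n + 1)"
proof -
  have yin: "-1 < y" "y < 1" using Ynodes_props(3)[OF n] y by auto
  have pos: "1 - y^2 > 0" using yin by (simp add: abs_square_less_1 abs_less_iff)
  define s where "s = sqrt (1 - y^2)"
  have spos: "s > 0" using pos by (simp add: s_def)
  have ss: "s^2 = 1 - y^2" using pos by (simp add: s_def)
  define a where "a = poly (Rod n (Suc n)) y"
  have a0: "a \<noteq> 0" using Ynodes_props(4)[OF n y] by (simp add: a_def)
  define P where "P = poly (Rod n n) 1"
  have P: "P = fact n * 2^n" by (simp add: P_def Rod_at_1)
  have key: "(2*real n+1) * P^2 / pi \<le> s^3 * a^2"
    using A_bound[OF n] sonin[OF n y] unfolding P s_def a_def by linarith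
  have "lam n y / s = 2 * P^2 / (s^3 * a^2)"
    unfolding christoffel[OF n y] P_def[symmetric] a_def[symmetric] ss[symmetric]
    using spos a0 by (simp add: field_simps power2_eq_square power3_eq_cube)
  also have "\<dots> \<le> 2 * P^2 / ((2*real n+1) * P^2 / pi)"
    by (rule divide_left_mono[OF key]) (use P spos a0 in \<open>auto intro!: mult_pos_pos divide_pos_pos\<close>)
  also have "\<dots> = 2 * pi / (2*real n + 1)"
    by (rule canc5) (use P in auto)
  finally show ?thesis by (simp add: s_def)
qed

lemma G_upper:
  assumes n: "n \<ge> 1"
  shows "G n \<le> 2 * real n * pi / (2*real n + 1)"
proof -
  have "G n \<le> (\<Sum>y\<in>Ynodes n. 2 * pi / (2*real n + 1))"
    unfolding G_def by (rule sum_mono) (rule node_bound[OF n])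
  also have "\<dots> = 2 * real n * pi / (2*real n + 1)" using Ynodes_props(2)[OF n] by simp
  finally show ?thesis .
qed

lemma G_pos: "n \<ge> 1 \<Longrightarrow> G n \<ge> 2"
  using G_lower[of n 1] by (simp add: cc_def)

lemma G_lim: "G \<longlonglongrightarrow> pi"
proof (rule LIMSEQ_I)
  fix r :: real assume r: "r > 0"
  obtain N where N: "pi - r < (\<Sum>k<N. 2 * cc k / (2*real k + 1))" using S_lower[OF r] by blast
  show "\<exists>no. \<forall>n\<ge>no. norm (G n - pi) < r"
  proof (intro exI allI impI)
    fix n assume n: "n \<ge> max N 1"
    have "pi - r < G n" using N G_lower[of n N] n by simp
    moreover have "G n \<le> 2 * real n * pi / (2*real n + 1)" using G_upper[of n] n by simp
    moreover have "2 * real n * pi / (2*real n + 1) \<le> pi"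
      by (simp add: field_simps)
    ultimately show "norm (G n - pi) < r" by simp
  qed
qed


lemma t_sqrt: "0 < t \<Longrightarrow> t < 1 \<Longrightarrow> t * sqrt ((1 - t) / t) = sqrt (t * (1 - t))"
proof -
  assume t: "0 < t" "t < 1"
  have "t * sqrt ((1 - t) / t) = sqrt (t^2) * sqrt ((1 - t) / t)" using t by simp
  also have "\<dots> = sqrt (t^2 * ((1 - t) / t))" by (rule real_sqrt_mult[symmetric])
  also have "t^2 * ((1 - t) / t) = t * (1 - t)" using t by (simp add: power2_eq_square)
  finally show ?thesis .
qed

definition Ep :: "nat \<Rightarrow> nat \<Rightarrow> real poly" where
  "Ep l x = [:0,1:]^x * [:1,-1:]^(l-x)"

lemma fLX_eq:
  assumes t: "0 < t" "t < 1" and lx: "x < l"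
  shows "fLX l x t = sqrt (t * (1 - t)) * poly (pderiv (Ep l x)) t"
proof -
  obtain k where k: "l - x = Suc k" using lx by (metis Suc_diff_Suc)
  have s1: "(1 - t) * sqrt (t / (1 - t)) = sqrt (t * (1 - t))"
    using t_sqrt[of "1 - t"] t by (simp add: mult.commute)
  have s0: "t * sqrt ((1 - t) / t) = sqrt (t * (1 - t))" using t_sqrt t by simp
  have dE: "poly (pderiv (Ep l x)) t = real x * t^(x-1) * (1-t)^(l-x) - real (l-x) * t^x * (1-t)^k"
  proof -
    have d1: "pderiv [:0,1::real:] = 1" by (simp add: pderiv_pCons)
    have d2: "pderiv [:1,-1::real:] = [:-1:]" by (simp add: pderiv_pCons)
    show ?thesis unfolding Ep_def pderiv_mult k pderiv_power_Suc pderiv_power d1 d2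
      by (simp add: algebra_simps)
  qed
  have "fLX l x t = real x * (t^x * sqrt ((1 - t) / t)) * (1-t)^(l-x)
        - real (l-x) * t^x * ((1-t)^(l-x) * sqrt ((1 - (1 - t)) / (1 - t)))"
    by (simp add: fLX_def sigma_def algebra_simps)
  also have "(1-t)^(l-x) * sqrt ((1 - (1 - t)) / (1 - t)) = (1-t)^k * sqrt (t * (1 - t))"
    unfolding k using s1 by simp
  also have "real x * (t^x * sqrt ((1 - t) / t)) = real x * t^(x-1) * sqrt (t * (1 - t))"
  proof (cases x)
    case 0 thus ?thesis by simp
  next
    case (Suc j)
    thus ?thesis using s0 by (simp add: mult_ac)
  qed
  finally show ?thesis unfolding dE by (simp add: algebra_simps)
qed

lemma legendre_Rod: "legendre_shift n = pcompose (Rod n n) [:-1,2:]"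
  by (simp add: legendre_shift_def Rod_def)

lemma poly_leg: "poly (legendre_shift n) t = poly (Rod n n) (2*t - 1)"
  by (simp add: legendre_Rod poly_pcompose algebra_simps)

lemma poly_dleg: "poly (pderiv (legendre_shift n)) t = 2 * poly (Rod n (Suc n)) (2*t - 1)"
proof -
  have "pderiv [:-1,2::real:] = [:2:]" by (simp add: pderiv_pCons)
  thus ?thesis by (simp add: legendre_Rod pderiv_pcompose poly_pcompose Rod_Suc algebra_simps)
qed

lemma supp_eq: "GL_support n = (\<lambda>y. (y+1)/2) ` Ynodes n"
proof
  show "GL_support n \<subseteq> (\<lambda>y. (y+1)/2) ` Ynodes n"
  proof
    fix t assume "t \<in> GL_support n"
    hence "2*t - 1 \<in> Ynodes n" by (simp add: GL_support_def Ynodes_def poly_leg)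
    moreover have "t = ((2*t - 1) + 1) / 2" by simp
    ultimately show "t \<in> (\<lambda>y. (y+1)/2) ` Ynodes n" by blast
  qed
  show "(\<lambda>y. (y+1)/2) ` Ynodes n \<subseteq> GL_support n"
  proof
    fix t assume "t \<in> (\<lambda>y. (y+1)/2) ` Ynodes n"
    then obtain y where y: "y \<in> Ynodes n" "t = (y+1)/2" by blast
    have "2*t - 1 = y" using y(2) by simp
    thus "t \<in> GL_support n" using y(1) by (simp add: GL_support_def Ynodes_def poly_leg)
  qed
qed

lemma inj_half: "inj_on (\<lambda>y::real. (y+1)/2) A"
  by (rule inj_onI) simp

lemma canc6: "u > 0 \<Longrightarrow> s > 0 \<Longrightarrow> a \<noteq> 0 \<Longrightarrow> 1 / (u/4 * (s/2) * (2*a)^2) = 2 / (u * s * a^2 :: real)"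
  by (simp add: field_simps power2_eq_square)

lemma weight_eq:
  assumes n: "n \<ge> 1" and y: "y \<in> Ynodes n"
  shows "GL_weight n ((y+1)/2) = lam n y / ((poly (Rod n n) 1)^2 * sqrt (1 - y^2))"
proof -
  have yin: "-1 < y" "y < 1" using Ynodes_props(3)[OF n] y by auto
  have pos: "1 - y^2 > 0" using yin by (simp add: abs_square_less_1 abs_less_iff)
  define s where "s = sqrt (1 - y^2)"
  have spos: "s > 0" using pos by (simp add: s_def)
  have ss: "s^2 = 1 - y^2" using pos by (simp add: s_def)
  define a where "a = poly (Rod n (Suc n)) y"
  have a0: "a \<noteq> 0" using Ynodes_props(4)[OF n y] by (simp add: a_def)
  define P where "P = poly (Rod n n) 1"
  have P0: "P > 0" using R1_pos by (simp add: P_def)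
  have tt: "(y+1)/2 * (1 - (y+1)/2) = (1 - y^2)/4" by (simp add: field_simps power2_eq_square)
  have e32: "(3/2::real) = 1 + 1/2" by simp
  have "((1 - y^2)/4) powr (3/2) = ((1 - y^2)/4) powr 1 * ((1 - y^2)/4) powr (1/2)"
    unfolding e32 by (rule powr_add)
  also have "\<dots> = (1 - y^2)/4 * (s / 2)"
    using pos by (simp add: powr_half_sqrt s_def real_sqrt_divide)
  finally have pw: "((1 - y^2)/4) powr (3/2) = (1 - y^2)/4 * (s / 2)" .
  have yy: "2 * ((y+1)/2) - 1 = y" by (simp add: field_simps)
  have d: "poly (pderiv (legendre_shift n)) ((y+1)/2) = 2 * a" unfolding poly_dleg yy a_def ..
  have "GL_weight n ((y+1)/2) = 1 / ((1 - y^2)/4 * (s / 2) * (2 * a)^2)"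
    unfolding GL_weight_def tt pw d ..
  also have "\<dots> = 2 / ((1 - y^2) * s * a^2)" by (rule canc6) (use pos spos a0 in auto)
  also have "\<dots> = lam n y / (P^2 * s)"
    unfolding christoffel[OF n y] P_def[symmetric] a_def[symmetric]
    using P0 spos a0 pos by (simp add: field_simps power2_eq_square)
  finally show ?thesis by (simp add: P_def s_def)
qed

lemma GL_E_eq:
  assumes n: "n \<ge> 1"
  shows "GL_E (2*n) g = (\<Sum>y\<in>Ynodes n. lam n y / sqrt (1 - y^2) * g ((y+1)/2)) / G n"
proof -
  define P where "P = poly (Rod n n) 1"
  have P0: "P > 0" using R1_pos by (simp add: P_def)
  have "(\<Sum>p\<in>GL_support n. GL_weight n p * g p) = (\<Sum>y\<in>Ynodes n. GL_weight n ((y+1)/2) * g ((y+1)/2))"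
    unfolding supp_eq by (simp add: sum.reindex[OF inj_half])
  also have "\<dots> = (\<Sum>y\<in>Ynodes n. lam n y / sqrt (1 - y^2) * g ((y+1)/2)) / P^2"
    unfolding sum_divide_distrib
    by (intro sum.cong refl) (simp add: weight_eq[OF n] P_def field_simps)
  finally have num: "(\<Sum>p\<in>GL_support n. GL_weight n p * g p) = (\<Sum>y\<in>Ynodes n. lam n y / sqrt (1 - y^2) * g ((y+1)/2)) / P^2" .
  have "(\<Sum>p\<in>GL_support n. GL_weight n p) = (\<Sum>y\<in>Ynodes n. GL_weight n ((y+1)/2))"
    unfolding supp_eq by (simp add: sum.reindex[OF inj_half])
  also have "\<dots> = G n / P^2"
    unfolding G_def sum_divide_distrib
    by (intro sum.cong refl) (simp add: weight_eq[OF n] P_def field_simps)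
  finally have den: "(\<Sum>p\<in>GL_support n. GL_weight n p) = G n / P^2" .
  show ?thesis unfolding GL_E_def Let_def using num den P0 by simp
qed

lemma Jf_Dc:
  "Jf (pcompose (pderiv E) [:1/2,1/2:]) = 2 * (poly E 1 - poly E 0)"
proof -
  have dq: "pderiv [:1/2,1/2::real:] = [:1/2:]" by (simp add: pderiv_pCons)
  have "pderiv (pcompose E [:1/2,1/2:]) = smult (1/2) (pcompose (pderiv E) [:1/2,1/2:])"
    unfolding pderiv_pcompose dq by simp
  hence "Jf (pderiv (pcompose E [:1/2,1/2:])) = 1/2 * Jf (pcompose (pderiv E) [:1/2,1/2:])"
    by (simp add: Jf_smult)
  moreover have "Jf (pderiv (pcompose E [:1/2,1/2:])) = poly E 1 - poly E 0"
    by (simp add: Jf_pderiv poly_pcompose)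
  ultimately show ?thesis by simp
qed

lemma degree_Ep: "degree (Ep l x) \<le> l" if "x \<le> l"
proof -
  have "degree (Ep l x) \<le> degree ([:0,1::real:]^x) + degree ([:1,-1::real:]^(l-x))"
    unfolding Ep_def by (rule degree_mult_le)
  also have "\<dots> \<le> x + (l - x)"
    by (intro add_mono) (auto intro: order.trans[OF degree_power_le])
  finally show ?thesis using that by simp
qed

lemma GL_E_fLX:
  assumes n: "n \<ge> 1" and lx: "x < l" and l: "l \<le> 2*n"
  shows "GL_E (2*n) (fLX l x) = (poly (Ep l x) 1 - poly (Ep l x) 0) / G n"
proof -
  define Dc where "Dc = pcompose (pderiv (Ep l x)) [:1/2,1/2:]"
  have dDc: "degree Dc < 2*n"
  proof -
    have "degree Dc \<le> degree (pderiv (Ep l x)) * degree [:1/2,1/2::real:]"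
      unfolding Dc_def by (rule degree_pcompose_le)
    also have "\<dots> = degree (Ep l x) - 1" by (simp add: degree_pderiv)
    also have "\<dots> \<le> l - 1" using degree_Ep[of x l] lx by simp
    finally show ?thesis using lx l by simp
  qed
  have "(\<Sum>y\<in>Ynodes n. lam n y / sqrt (1 - y^2) * fLX l x ((y+1)/2))
        = (\<Sum>y\<in>Ynodes n. lam n y * poly Dc y) / 2"
    unfolding sum_divide_distrib
  proof (intro sum.cong refl)
    fix y assume y: "y \<in> Ynodes n"
    have yin: "-1 < y" "y < 1" using Ynodes_props(3)[OF n] y by auto
    have pos: "1 - y^2 > 0" using yin by (simp add: abs_square_less_1 abs_less_iff)
    have t: "0 < (y+1)/2" "(y+1)/2 < 1" using yin by auto
    have tt: "(y+1)/2 * (1 - (y+1)/2) = (1 - y^2)/4" by (simp add: field_simps power2_eq_square)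
    have st: "sqrt ((y+1)/2 * (1 - (y+1)/2)) = sqrt (1 - y^2) / 2"
      unfolding tt by (simp add: real_sqrt_divide)
    have pd: "poly Dc y = poly (pderiv (Ep l x)) ((y+1)/2)"
      by (simp add: Dc_def poly_pcompose field_simps)
    have "lam n y / sqrt (1 - y^2) * fLX l x ((y+1)/2)
        = lam n y / sqrt (1 - y^2) * (sqrt (1 - y^2) / 2 * poly Dc y)"
      unfolding fLX_eq[OF t lx] st pd ..
    also have "\<dots> = lam n y * poly Dc y / 2" using pos by simp
    finally show "lam n y / sqrt (1 - y^2) * fLX l x ((y+1)/2) = lam n y * poly Dc y / 2" .
  qed
  also have "\<dots> = Jf Dc / 2" using exactness[OF n dDc] by simp
  also have "\<dots> = poly (Ep l x) 1 - poly (Ep l x) 0" unfolding Dc_def Jf_Dc by simp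
  finally show ?thesis unfolding GL_E_eq[OF n] by simp
qed

lemma GL_E_neg:
  assumes n: "n \<ge> 1"
  shows "GL_E (2*n) (\<lambda>p. - f p) = - GL_E (2*n) f"
  unfolding GL_E_eq[OF n] by (simp add: sum_negf)

lemma calR_eq:
  assumes n: "n \<ge> 1" and l: "1 \<le> l" "l \<le> 2*n"
  shows "calR l (GL_E (2*n)) = 1 / G n"
proof -
  have e0: "GL_E (2*n) (fLX l 0) = - 1 / G n"
  proof -
    have z: "(0::real)^l = 0" using l(1) by simp
    show ?thesis using GL_E_fLX[OF n _ l(2), of 0] l(1) by (simp add: Ep_def z)
  qed
  have ex: "R_lx (GL_E (2*n)) l x = 0" if "x \<in> {1..l-1}" for x
  proof -
    have x: "1 \<le> x" "x < l" using that l by auto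
    have "poly (Ep l x) 1 = 0" "poly (Ep l x) 0 = 0" using x by (simp_all add: Ep_def)
    thus ?thesis using GL_E_fLX[OF n x(2) l(2)] by (simp add: R_lx_def)
  qed
  have "calR l (GL_E (2*n)) = GL_E (2*n) (\<lambda>p. - fLX l 0 p)"
    unfolding calR_def using ex by simp
  also have "\<dots> = 1 / G n" unfolding GL_E_neg[OF n] e0 by simp
  finally show ?thesis .
qed


theorem proposition6:
  shows "(\<forall>c::nat. even c \<and> c \<ge> 2 \<longrightarrow>
            (\<forall>l. 1 \<le> l \<and> l \<le> c \<longrightarrow> calR l (GL_E c) \<ge> (real c + 1) / (real c * pi)))
       \<and> (\<forall>l::nat. l \<ge> 1 \<longrightarrow> ((\<lambda>\<nu>::nat. calR l (GL_E (2 * \<nu>))) \<longlonglongrightarrow> 1 / pi))"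
proof (intro conjI allI impI)
  fix c l :: nat
  assume c: "even c \<and> c \<ge> 2" and l: "1 \<le> l \<and> l \<le> c"
  define n where "n = c div 2"
  have cn: "c = 2*n" using c by (simp add: n_def)
  have n: "n \<ge> 1" using c cn by linarith
  have R: "calR l (GL_E c) = 1 / G n" unfolding cn by (rule calR_eq[OF n]) (use l cn in auto)
  have G2: "G n \<ge> 2" by (rule G_pos[OF n])
  have Gu: "G n \<le> 2 * real n * pi / (2*real n + 1)" by (rule G_upper[OF n])
  have "1 / (2 * real n * pi / (2*real n + 1)) \<le> 1 / G n"
    by (rule divide_left_mono[OF Gu]) (use G2 n in \<open>auto intro!: mult_pos_pos divide_pos_pos\<close>)
  moreover have "1 / (2 * real n * pi / (2*real n + 1)) = (real c + 1) / (real c * pi)"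
    unfolding cn by simp
  ultimately show "calR l (GL_E c) \<ge> (real c + 1) / (real c * pi)" using R by simp
next
  fix l :: nat assume l: "l \<ge> 1"
  have lim: "(\<lambda>n. 1 / G n) \<longlonglongrightarrow> 1 / pi"
    by (rule tendsto_divide[OF tendsto_const G_lim]) simp
  have ev: "eventually (\<lambda>n. 1 / G n = calR l (GL_E (2 * n))) sequentially"
    unfolding eventually_sequentially
  proof (intro exI allI impI)
    fix n assume "n \<ge> l"
    hence "n \<ge> 1" "l \<le> 2*n" using l by auto
    thus "1 / G n = calR l (GL_E (2 * n))" using calR_eq l by simp
  qed
  show "(\<lambda>\<nu>::nat. calR l (GL_E (2 * \<nu>))) \<longlonglongrightarrow> 1 / pi"
    by (rule Lim_transform_eventually[OF lim ev])
qed


end
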